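(* Let $G$ be a group with a conjugation-closed generating set $X$ and let $g\in\mathrm{Mon}(X)$. The interval complex $K_g$ of the interval $[1,g]$ is isometric to the space $\mathrm{WFact}(G,g,\mathbf S)$ of weighted circular factorizations of $g$.
   Context: $\mathrm{Mon}(X)$ is the generated submonoid; $\ell(x)$ is the minimal length of a product of elements of $X$ equal to $x$; $x\le y$ if there is $x'\in\mathrm{Mon}(X)$ with $xx'=y$ and $\ell(x)+\ell(x')=\ell(y)$; $[1,g]=\{x:x\le g\}$, of height $n=\ell(g)$. $O_g$ is the order complex of $[1,g]$ with the orthoscheme metric: each maximal simplex (maximal chain $x_0<\cdots<x_n$) is the standard orthoscheme $\{0\le y_1\le\cdots\le y_n\le1\}\subset\mathbb R^n$ with $x_i$ at the vertex whose last $i$ coordinates are $1$. $K_g$ is the quotient metric space of $O_g$ obtained by identifying, via the order-preserving affine isometry, the simplices of chains $x_0<\cdots<x_k$ and $y_0<\cdots<y_k$ whenever $x_{i-1}^{-1}x_i=y_{i-1}^{-1}y_i$ for all $1\le i\le k$. A linear factorization of $g$ is $[x_L\ x_1\cdots x_k\ x_R]$ with entries in $\mathrm{Mon}(X)$, $x_1,\dots,x_k\ne1$, lengths summing to $\ell(g)$, product $g$. A weighted linear factorization of $g$ is a function $\mathbf u\colon[0,1]\to G$, trivial at all but finitely many points, such that with $0<s_1<\dots<s_k<1$ the points of $(0,1)$ where $\mathbf u$ is nontrivial, $P(\mathbf u)=[\mathbf u(0)\ \mathbf u(s_1)\cdots\mathbf u(s_k)\ \mathbf u(1)]$ is a linear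 factorization of $g$; write $0^{x_L}s_1^{x_1}\cdots s_k^{x_k}1^{x_R}$. The space $\mathrm{WFact}(G,g,\mathbf I)$ of these is a piecewise-Euclidean complex: via $\mathbf u\mapsto\ell\circ\mathbf u$ each cell $\{\mathbf u:P(\mathbf u)=\mathbf x\}$ is identified with an open face of the orthoscheme $\{0\le y_1\le\cdots\le y_n\le1\}$ in which a multiset of $n$ points of $[0,1]$, listed in nondecreasing order, is a point; the metric is pulled back. $\mathrm{WFact}(G,g,\mathbf S)$ is the quotient of $\mathrm{WFact}(G,g,\mathbf I)$ identifying (isometrically, cell by cell) $0^{x_L}s_1^{x_1}\cdots s_k^{x_k}1^{x_R}$ with $0^{y_L}s_1^{y_1}\cdots s_k^{y_k}1^{y_R}$ whenever $x_i=y_i$ for all $1\le i\le k$; it carries the quotient metric. *)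

theory Defs
  imports "HOL-Algebra.Algebra"
begin

definition wprod :: "('a,'b) monoid_scheme \<Rightarrow> 'a list \<Rightarrow> 'a" where
  "wprod G xs = foldr (\<lambda>x y. x \<otimes>\<^bsub>G\<^esub> y) xs \<one>\<^bsub>G\<^esub>"

definition conj_closed :: "('a,'b) monoid_scheme \<Rightarrow> 'a set \<Rightarrow> bool" where
  "conj_closed G S \<longleftrightarrow>
     (\<forall>x\<in>S. \<forall>h\<in>carrier G. h \<otimes>\<^bsub>G\<^esub> x \<otimes>\<^bsub>G\<^esub> m_inv G h \<in> S)"

definition Mon :: "('a,'b) monoid_scheme \<Rightarrow> 'a set \<Rightarrow> 'a set" where
  "Mon G S = {wprod G xs | xs. set xs \<subseteq> S}"

definition wlen :: "('a,'b) monoid_scheme \<Rightarrow> 'a set \<Rightarrow> 'a \<Rightarrow> nat" where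
  "wlen G S x = (LEAST n. \<exists>xs. set xs \<subseteq> S \<and> length xs = n \<and> wprod G xs = x)"

definition pleq :: "('a,'b) monoid_scheme \<Rightarrow> 'a set \<Rightarrow> 'a \<Rightarrow> 'a \<Rightarrow> bool" where
  "pleq G S x y \<longleftrightarrow> x \<in> Mon G S \<and>
     (\<exists>x'\<in>Mon G S. x \<otimes>\<^bsub>G\<^esub> x' = y \<and> wlen G S x + wlen G S x' = wlen G S y)"

definition interval :: "('a,'b) monoid_scheme \<Rightarrow> 'a set \<Rightarrow> 'a \<Rightarrow> 'a set" where
  "interval G S g = {x. pleq G S x g}"

definition is_chain :: "('a,'b) monoid_scheme \<Rightarrow> 'a set \<Rightarrow> 'a \<Rightarrow> 'a list \<Rightarrow> bool" where
  "is_chain G S g c \<longleftrightarrow> set c \<subseteq> interval G S g \<and>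
     sorted_wrt (\<lambda>a b. pleq G S a b \<and> a \<noteq> b) c"

definition is_maxchain :: "('a,'b) monoid_scheme \<Rightarrow> 'a set \<Rightarrow> 'a \<Rightarrow> 'a list \<Rightarrow> bool" where
  "is_maxchain G S g c \<longleftrightarrow> is_chain G S g c \<and>
     \<not> (\<exists>c'. is_chain G S g c' \<and> set c \<subset> set c')"

definition supp :: "('a \<Rightarrow> real) \<Rightarrow> 'a set" where
  "supp p = {x. p x \<noteq> 0}"

text \<open>Points of O_g: barycentric weight functions supported on a chain of [1,g].\<close>
definition Opts :: "('a,'b) monoid_scheme \<Rightarrow> 'a set \<Rightarrow> 'a \<Rightarrow> ('a \<Rightarrow> real) set" where
  "Opts G S g = {p. (\<forall>x. 0 \<le> p x) \<and> finite (supp p) \<and> supp p \<subseteq> interval G S g \<and>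
      (\<forall>x\<in>supp p. \<forall>y\<in>supp p. pleq G S x y \<or> pleq G S y x) \<and> sum p (supp p) = 1}"

text \<open>Orthoscheme coordinates of a point p in the simplex of the maximal chain
  c = [x_0,...,x_n]: x_i sits at the vertex whose last i coordinates are 1, so
  the j-th coordinate (1 \<le> j \<le> n) is the total weight of x_{n+1-j},...,x_n.\<close>
definition ocoord :: "'a list \<Rightarrow> ('a \<Rightarrow> real) \<Rightarrow> nat \<Rightarrow> real" where
  "ocoord c p j = (\<Sum>i\<in>{length c - j..<length c}. p (c ! i))"

definition odist :: "'a list \<Rightarrow> ('a \<Rightarrow> real) \<Rightarrow> ('a \<Rightarrow> real) \<Rightarrow> real" where
  "odist c p q = sqrt (\<Sum>j\<in>{1..length c - 1}. (ocoord c p j - ocoord c q j)^2)"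

definition ostep :: "('a,'b) monoid_scheme \<Rightarrow> 'a set \<Rightarrow> 'a \<Rightarrow>
    ('a \<Rightarrow> real) \<Rightarrow> ('a \<Rightarrow> real) \<Rightarrow> real \<Rightarrow> bool" where
  "ostep G S g p q r \<longleftrightarrow> (\<exists>c. is_maxchain G S g c \<and> supp p \<subseteq> set c \<and> supp q \<subseteq> set c \<and>
      r = odist c p q)"

text \<open>The gluing of K_g: two points are identified iff their support chains have the
  same sequences of labels x_{i-1}^{-1} x_i and corresponding barycentric weights.\<close>
definition Kequiv :: "('a,'b) monoid_scheme \<Rightarrow> 'a set \<Rightarrow> 'a \<Rightarrow>
    ('a \<Rightarrow> real) \<Rightarrow> ('a \<Rightarrow> real) \<Rightarrow> bool" where
  "Kequiv G S g p q \<longleftrightarrow> (\<exists>a b. is_chain G S g a \<and> is_chain G S g b \<and>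
      set a = supp p \<and> set b = supp q \<and> length a = length b \<and>
      (\<forall>i<length a. p (a ! i) = q (b ! i)) \<and>
      (\<forall>i. 0 < i \<and> i < length a \<longrightarrow>
          m_inv G (a ! (i - 1)) \<otimes>\<^bsub>G\<^esub> (a ! i) = m_inv G (b ! (i - 1)) \<otimes>\<^bsub>G\<^esub> (b ! i)))"

text \<open>Given the points P, the in-cell steps (a, b, r): a and b lie in a common closed cell
  at cell distance r, and the gluing relation E, the quotient (pseudo)metric is the infimum
  of total lengths of strings of in-cell steps, consecutive steps being glued by E.\<close>
definition qdist :: "'p set \<Rightarrow> ('p \<Rightarrow> 'p \<Rightarrow> real \<Rightarrow> bool) \<Rightarrow> ('p \<Rightarrow> 'p \<Rightarrow> bool) \<Rightarrow>
    'p \<Rightarrow> 'p \<Rightarrow> real" where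
  "qdist P step E p q = Inf {sum_list (map (\<lambda>(a,b,r). r) s) | s.
      s \<noteq> [] \<and> E p (fst (hd s)) \<and> E (fst (snd (last s))) q \<and>
      (\<forall>(a,b,r)\<in>set s. a \<in> P \<and> b \<in> P \<and> step a b r) \<and>
      (\<forall>i. i + 1 < length s \<longrightarrow> E (fst (snd (s ! i))) (fst (s ! (i + 1))))}"

definition lin_fact :: "('a,'b) monoid_scheme \<Rightarrow> 'a set \<Rightarrow> 'a \<Rightarrow> 'a list \<Rightarrow> bool" where
  "lin_fact G S g fs \<longleftrightarrow> 2 \<le> length fs \<and> set fs \<subseteq> Mon G S \<and>
     (\<forall>i. 0 < i \<and> i + 1 < length fs \<longrightarrow> fs ! i \<noteq> \<one>\<^bsub>G\<^esub>) \<and>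
     sum_list (map (wlen G S) fs) = wlen G S g \<and> wprod G fs = g"

definition wpts :: "('a,'b) monoid_scheme \<Rightarrow> (real \<Rightarrow> 'a) \<Rightarrow> real list" where
  "wpts G u = sorted_list_of_set ({0, 1} \<union> {t. 0 < t \<and> t < 1 \<and> u t \<noteq> \<one>\<^bsub>G\<^esub>})"

definition WFactI :: "('a,'b) monoid_scheme \<Rightarrow> 'a set \<Rightarrow> 'a \<Rightarrow> (real \<Rightarrow> 'a) set" where
  "WFactI G S g = {u. (\<forall>t. t \<notin> {0..1} \<longrightarrow> u t = \<one>\<^bsub>G\<^esub>) \<and>
      finite {t. u t \<noteq> \<one>\<^bsub>G\<^esub>} \<and> lin_fact G S g (map u (wpts G u))}"

text \<open>Orthoscheme coordinates: the multiset with s of multiplicity ell(u(s)), sorted.\<close>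
definition wcoord :: "('a,'b) monoid_scheme \<Rightarrow> 'a set \<Rightarrow> (real \<Rightarrow> 'a) \<Rightarrow> real list" where
  "wcoord G S u = concat (map (\<lambda>t. replicate (wlen G S (u t)) t) (wpts G u))"

definition wdist :: "('a,'b) monoid_scheme \<Rightarrow> 'a set \<Rightarrow> (real \<Rightarrow> 'a) \<Rightarrow> (real \<Rightarrow> 'a) \<Rightarrow> real" where
  "wdist G S u v = sqrt (sum_list (map (\<lambda>(a,b). (a - b)^2) (zip (wcoord G S u) (wcoord G S v))))"

text \<open>Point of the closed cell of the linear factorization fs = [x_L, x_1,..,x_k, x_R]
  with nondecreasing positions t = [0, t_1, .., t_k, 1]: the factors placed at the same
  position are multiplied in order.\<close>
definition realize :: "('a,'b) monoid_scheme \<Rightarrow> 'a list \<Rightarrow> real list \<Rightarrow> real \<Rightarrow> 'a" where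
  "realize G fs t s = wprod G [fs ! i. i \<leftarrow> [0..<length fs], t ! i = s]"

definition cell_pos :: "nat \<Rightarrow> real list \<Rightarrow> bool" where
  "cell_pos k t \<longleftrightarrow> length t = k \<and> sorted t \<and> hd t = 0 \<and> last t = 1"

definition wstep :: "('a,'b) monoid_scheme \<Rightarrow> 'a set \<Rightarrow> 'a \<Rightarrow>
    (real \<Rightarrow> 'a) \<Rightarrow> (real \<Rightarrow> 'a) \<Rightarrow> real \<Rightarrow> bool" where
  "wstep G S g u v r \<longleftrightarrow> (\<exists>fs t t'. lin_fact G S g fs \<and>
      cell_pos (length fs) t \<and> cell_pos (length fs) t' \<and>
      u = realize G fs t \<and> v = realize G fs t') \<and> r = wdist G S u v"

definition Sequiv :: "(real \<Rightarrow> 'a) \<Rightarrow> (real \<Rightarrow> 'a) \<Rightarrow> bool" where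
  "Sequiv u v \<longleftrightarrow> (\<forall>t. 0 < t \<and> t < 1 \<longrightarrow> u t = v t)"

end

theory Submission
  imports Defs
begin

locale WF = group G for G :: "('a,'b) monoid_scheme" (structure) +
  fixes S :: "'a set" and g :: 'a
  assumes S_sub: "S \<subseteq> carrier G" and g_Mon: "g \<in> Mon G S"
begin

abbreviation "len \<equiv> wlen G S"
abbreviation "ple \<equiv> pleq G S"

lemma wprod_Nil[simp]: "wprod G [] = \<one>" by (simp add: wprod_def)
lemma wprod_Cons[simp]: "wprod G (x#xs) = x \<otimes> wprod G xs" by (simp add: wprod_def)

lemma wprod_closed[intro,simp]: "set xs \<subseteq> carrier G \<Longrightarrow> wprod G xs \<in> carrier G"
  by (induction xs) auto

lemma wprod_append: "set xs \<subseteq> carrier G \<Longrightarrow> set ys \<subseteq> carrier G \<Longrightarrow>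
   wprod G (xs@ys) = wprod G xs \<otimes> wprod G ys"
  by (induction xs) (auto simp: m_assoc)

lemma wprod_concat: "set (concat xss) \<subseteq> carrier G \<Longrightarrow>
   wprod G (concat xss) = wprod G (map (wprod G) xss)"
  by (induction xss) (auto simp: wprod_append)

lemma Mon_carrier: "Mon G S \<subseteq> carrier G"
  using S_sub by (auto simp: Mon_def)

lemma Mon_carrier'[simp]: "x \<in> Mon G S \<Longrightarrow> x \<in> carrier G"
  using Mon_carrier by auto

lemma one_Mon[simp]: "\<one> \<in> Mon G S"
  unfolding Mon_def by (rule CollectI, rule exI[of _ "[]"]) simp

lemma S_Mon: "s \<in> S \<Longrightarrow> s \<in> Mon G S"
  unfolding Mon_def using S_sub by (auto intro!: exI[of _ "[s]"])

lemma wprod_Mon: "set xs \<subseteq> S \<Longrightarrow> wprod G xs \<in> Mon G S"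
  unfolding Mon_def by auto

lemma Mon_mult[intro,simp]: "x \<in> Mon G S \<Longrightarrow> y \<in> Mon G S \<Longrightarrow> x \<otimes> y \<in> Mon G S"
proof -
  assume "x \<in> Mon G S" "y \<in> Mon G S"
  then obtain xs ys where "set xs \<subseteq> S" "set ys \<subseteq> S" "x = wprod G xs" "y = wprod G ys"
    by (auto simp: Mon_def)
  then show ?thesis using S_sub
    by (auto simp: Mon_def wprod_append intro!: exI[of _ "xs@ys"])
qed

lemma wprod_Mon2: "set xs \<subseteq> Mon G S \<Longrightarrow> wprod G xs \<in> Mon G S"
  by (induction xs) auto

lemma wlen_ex: "x \<in> Mon G S \<Longrightarrow> \<exists>xs. set xs \<subseteq> S \<and> length xs = len x \<and> wprod G xs = x"
proof -
  assume "x \<in> Mon G S"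
  then obtain xs where "set xs \<subseteq> S" "wprod G xs = x" by (auto simp: Mon_def)
  then have "\<exists>n xs. set xs \<subseteq> S \<and> length xs = n \<and> wprod G xs = x" by blast
  from LeastI_ex[OF this] show ?thesis unfolding wlen_def by blast
qed

lemma wlen_le: "set xs \<subseteq> S \<Longrightarrow> len (wprod G xs) \<le> length xs"
  unfolding wlen_def by (rule Least_le) blast

lemma wlen_mult: "x \<in> Mon G S \<Longrightarrow> y \<in> Mon G S \<Longrightarrow> len (x \<otimes> y) \<le> len x + len y"
proof -
  assume "x \<in> Mon G S" "y \<in> Mon G S"
  then obtain xs ys where "set xs \<subseteq> S" "set ys \<subseteq> S" "x = wprod G xs" "y = wprod G ys"
     "length xs = len x" "length ys = len y"
    using wlen_ex by metis
  then have "x \<otimes> y = wprod G (xs@ys)" using S_sub by (simp add: wprod_append)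
  moreover have "len (wprod G (xs@ys)) \<le> length (xs@ys)"
    by (rule wlen_le) (use \<open>set xs \<subseteq> S\<close> \<open>set ys \<subseteq> S\<close> in auto)
  ultimately show ?thesis using \<open>length xs = len x\<close> \<open>length ys = len y\<close> by simp
qed

lemma wlen_one[simp]: "len \<one> = 0"
  using wlen_le[of "[]"] by simp

lemma wlen_zero: "x \<in> Mon G S \<Longrightarrow> len x = 0 \<Longrightarrow> x = \<one>"
proof -
  assume "x \<in> Mon G S" "len x = 0"
  then obtain xs where "length xs = 0" "wprod G xs = x" using wlen_ex by metis
  then show ?thesis by simp
qed

lemma wlen_S: "s \<in> S \<Longrightarrow> len s \<le> 1"
  using wlen_le[of "[s]"] S_sub by auto

lemma wlen1_S: "x \<in> Mon G S \<Longrightarrow> len x = 1 \<Longrightarrow> x \<in> S"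
proof -
  assume "x \<in> Mon G S" "len x = 1"
  then obtain xs where "set xs \<subseteq> S" "length xs = 1" "wprod G xs = x" using wlen_ex by metis
  then obtain s where "xs = [s]" by (cases xs) auto
  then show ?thesis using \<open>set xs \<subseteq> S\<close> \<open>wprod G xs = x\<close> S_sub by auto
qed

lemma wlen_wprod_le: "set xs \<subseteq> Mon G S \<Longrightarrow> len (wprod G xs) \<le> sum_list (map len xs)"
proof (induction xs)
  case (Cons x xs)
  then have "len (x \<otimes> wprod G xs) \<le> len x + len (wprod G xs)"
    using wlen_mult[of x "wprod G xs"] wprod_Mon2[of xs] by simp
  then show ?case using Cons by simp
qed simp

lemma reduced_take:
  assumes "set w \<subseteq> S" "len (wprod G w) = length w" "i \<le> length w"
  shows "len (wprod G (take i w)) = i" "len (wprod G (drop i w)) = length w - i"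
proof -
  have c: "set (take i w) \<subseteq> S" "set (drop i w) \<subseteq> S" using assms(1) set_take_subset[of i w] set_drop_subset[of i w] by auto
  have cc: "set (take i w) \<subseteq> carrier G" "set (drop i w) \<subseteq> carrier G" using c S_sub by auto
  have e: "wprod G w = wprod G (take i w) \<otimes> wprod G (drop i w)"
    using wprod_append[OF cc] by (metis append_take_drop_id)
  have "length w = len (wprod G (take i w) \<otimes> wprod G (drop i w))"
    using assms(2) e by metis
  also have "\<dots> \<le> len (wprod G (take i w)) + len (wprod G (drop i w))"
    using wlen_mult[OF wprod_Mon[OF c(1)] wprod_Mon[OF c(2)]] .
  finally have t: "length w \<le> len (wprod G (take i w)) + len (wprod G (drop i w))" .
  have lt: "length (take i w) = i" using assms(3) by simp
  have a: "len (wprod G (take i w)) \<le> i" using wlen_le[OF c(1)] unfolding lt .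
  have ld: "length (drop i w) = length w - i" by simp
  have b: "len (wprod G (drop i w)) \<le> length w - i" using wlen_le[OF c(2)] unfolding ld .
  show "len (wprod G (take i w)) = i" "len (wprod G (drop i w)) = length w - i"
    using t a b assms(3) by linarith+
qed

end

context WF
begin

lemma pleqD:
  assumes "ple x y"
  shows "x \<in> Mon G S" "y \<in> Mon G S" "inv x \<otimes> y \<in> Mon G S" "len x + len (inv x \<otimes> y) = len y"
proof -
  from assms obtain x' where x: "x \<in> Mon G S" "x' \<in> Mon G S" "x \<otimes> x' = y" "len x + len x' = len y"
    using assms unfolding pleq_def by auto
  have "inv x \<otimes> y = inv x \<otimes> (x \<otimes> x')" using x(3) by simp
  also have "\<dots> = x'" using x(1,2) by (simp add: m_assoc[symmetric])
  finally have e: "inv x \<otimes> y = x'" .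
  show "y \<in> Mon G S" using Mon_mult[OF x(1) x(2)] x(3) by simp
  show "x \<in> Mon G S" using x(1) .
  show "inv x \<otimes> y \<in> Mon G S" unfolding e using x(2) .
  show "len x + len (inv x \<otimes> y) = len y" unfolding e using x(4) .
qed

lemma pleqI:
  assumes "x \<in> Mon G S" "y \<in> carrier G" "inv x \<otimes> y \<in> Mon G S" "len x + len (inv x \<otimes> y) = len y"
  shows "ple x y"
proof -
  have "x \<otimes> (inv x \<otimes> y) = y" using assms(1,2) by (simp add: m_assoc[symmetric])
  then show ?thesis unfolding pleq_def using assms by blast
qed

lemma pleq_refl: "x \<in> Mon G S \<Longrightarrow> ple x x"
  by (rule pleqI) auto

lemma pleq_one: "x \<in> Mon G S \<Longrightarrow> ple \<one> x"
  by (rule pleqI) auto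

lemma pleq_len: "ple x y \<Longrightarrow> len x \<le> len y"
proof -
  assume "ple x y" then show ?thesis using pleqD(4)[of x y] by simp
qed

lemma pleq_len_eq: "ple x y \<Longrightarrow> len x = len y \<Longrightarrow> x = y"
proof -
  assume a: "ple x y" "len x = len y"
  then have "len (inv x \<otimes> y) = 0" using pleqD(4)[OF a(1)] by simp
  then have "inv x \<otimes> y = \<one>" using wlen_zero pleqD(3)[OF a(1)] by blast
  moreover have "x \<otimes> (inv x \<otimes> y) = y" using pleqD(1,2)[OF a(1)] by (simp add: m_assoc[symmetric])
  ultimately show "x = y" using pleqD(1)[OF a(1)] by simp
qed

lemma pleq_antisym: "ple x y \<Longrightarrow> ple y x \<Longrightarrow> x = y"
proof -
  assume "ple x y" "ple y x"
  then have "len x = len y" using pleq_len[of x y] pleq_len[of y x] by simp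
  then show "x = y" using pleq_len_eq \<open>ple x y\<close> by blast
qed

lemma pleq_trans:
  assumes "ple x y" "ple y z" shows "ple x z"
proof -
  note a = pleqD[OF assms(1)] and b = pleqD[OF assms(2)]
  have xc: "x \<in> carrier G" "y \<in> carrier G" "z \<in> carrier G" using a b by auto
  have e: "inv x \<otimes> z = (inv x \<otimes> y) \<otimes> (inv y \<otimes> z)"
    using xc by (simp add: m_assoc[symmetric]) (simp add: m_assoc)
  then have m: "inv x \<otimes> z \<in> Mon G S" using a(3) b(3) by simp
  have "len (inv x \<otimes> z) \<le> len (inv x \<otimes> y) + len (inv y \<otimes> z)"
    unfolding e using wlen_mult a(3) b(3) by blast
  moreover have "len z \<le> len x + len (inv x \<otimes> z)"
  proof -
    have "z = x \<otimes> (inv x \<otimes> z)" using xc by (simp add: m_assoc[symmetric])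
    then show ?thesis using wlen_mult[OF a(1) m] by simp
  qed
  ultimately have "len x + len (inv x \<otimes> z) = len z" using a(4) b(4) by linarith
  then show ?thesis using pleqI a(1) xc m by blast
qed

lemma pleq_strict_len: "ple x y \<Longrightarrow> x \<noteq> y \<Longrightarrow> len x < len y"
proof -
  assume "ple x y" "x \<noteq> y"
  then have "len x \<noteq> len y" using pleq_len_eq by blast
  then show "len x < len y" using pleq_len[OF \<open>ple x y\<close>] by simp
qed

lemma interval_iff: "x \<in> interval G S g \<longleftrightarrow> ple x g"
  by (simp add: interval_def)

lemma pleq_mult:
  assumes "x \<in> Mon G S" "y \<in> Mon G S" "len (x \<otimes> y) = len x + len y"
  shows "ple x (x \<otimes> y)"
proof -
  have "inv x \<otimes> (x \<otimes> y) = y" using assms by (simp add: m_assoc[symmetric])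
  then show ?thesis using assms by (intro pleqI) auto
qed

lemma pleq_between:
  assumes "ple a b" "m \<le> len b - len a"
  shows "\<exists>z. ple a z \<and> ple z b \<and> len z = len a + m"
proof -
  note ab = pleqD[OF assms(1)]
  obtain w where w: "set w \<subseteq> S" "length w = len (inv a \<otimes> b)" "wprod G w = inv a \<otimes> b"
    using wlen_ex[OF ab(3)] by blast
  have ml: "m \<le> length w" using w(2) ab(4) assms(2) by simp
  have red: "len (wprod G w) = length w" using w by simp
  note rt = reduced_take[OF w(1) red ml]
  have c: "set (take m w) \<subseteq> S" "set (drop m w) \<subseteq> S" using w(1) set_take_subset[of m w] set_drop_subset[of m w] by auto
  have cc: "set (take m w) \<subseteq> carrier G" "set (drop m w) \<subseteq> carrier G" using c S_sub by auto
  define u where "u = wprod G (take m w)"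
  define v where "v = wprod G (drop m w)"
  have um: "u \<in> Mon G S" "v \<in> Mon G S" using c wprod_Mon u_def v_def by auto
  have uv: "u \<otimes> v = inv a \<otimes> b" unfolding u_def v_def using wprod_append[OF cc] w(3)
    by (metis append_take_drop_id)
  have ac: "a \<in> carrier G" "b \<in> carrier G" using ab by auto
  have b_eq: "b = (a \<otimes> u) \<otimes> v" using uv ac um by (simp add: m_assoc inv_solve_left)
  have l1: "len (a \<otimes> u) \<le> len a + m" using wlen_mult[OF ab(1) um(1)] rt(1) u_def by simp
  have l2: "len b \<le> len (a \<otimes> u) + len v" using b_eq wlen_mult[OF _ um(2), of "a \<otimes> u"] ab(1) um by simp
  have lv: "len v = length w - m" using rt(2) v_def by simp
  have lauv: "len (a \<otimes> u) = len a + m" using l1 l2 lv w(2) ab(4) ml by linarith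
  have "ple a (a \<otimes> u)" using pleq_mult[OF ab(1) um(1)] lauv rt(1) u_def by simp
  moreover have "ple (a \<otimes> u) b"
  proof -
    have "len b = len (a \<otimes> u) + len v" using lauv lv w(2) ab(4) ml by linarith
    then show ?thesis using pleq_mult[OF _ um(2), of "a \<otimes> u"] ab(1) um b_eq by simp
  qed
  ultimately show ?thesis using lauv by blast
qed

end

context WF
begin

abbreviation "n \<equiv> len g"
abbreviation "chain \<equiv> is_chain G S g"
abbreviation "slt \<equiv> (\<lambda>a b. ple a b \<and> a \<noteq> b)"

lemma g_interval: "g \<in> interval G S g"
  using pleq_refl g_Mon by (simp add: interval_iff)

lemma one_interval: "\<one> \<in> interval G S g"
  using pleq_one g_Mon by (simp add: interval_iff)

lemma interval_Mon: "x \<in> interval G S g \<Longrightarrow> x \<in> Mon G S"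
  using pleqD(1) by (simp add: interval_iff)

lemma interval_len: "x \<in> interval G S g \<Longrightarrow> len x \<le> n"
  using pleq_len by (simp add: interval_iff)

lemma chain_lens: "chain c \<Longrightarrow> sorted_wrt (<) (map len c)"
  unfolding is_chain_def sorted_wrt_map
  by (auto elim!: sorted_wrt_mono_rel[rotated] intro: pleq_strict_len)

lemma chain_distinct: "chain c \<Longrightarrow> distinct c"
  using chain_lens strict_sorted_iff distinct_map by blast

lemma chain_length: "chain c \<Longrightarrow> length c \<le> n + 1"
proof -
  assume c: "chain c"
  have "distinct (map len c)" using chain_lens[OF c] strict_sorted_iff by blast
  then have "length c = card (set (map len c))" using distinct_card by fastforce
  also have "set (map len c) \<subseteq> {0..n}" using c interval_len unfolding is_chain_def by auto
  then have "card (set (map len c)) \<le> card {0..n}" by (intro card_mono) auto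
  finally show ?thesis by simp
qed

lemma nat_list_full:
  assumes "sorted_wrt (<) xs" "length xs = m + 1" "\<forall>x\<in>set xs. x \<le> (m::nat)"
  shows "xs = [0..<m+1]"
proof -
  have "set xs \<subseteq> {0..<m+1}" using assms(3) by auto
  moreover have "card (set xs) = m + 1" using assms(1,2) distinct_card strict_sorted_iff by metis
  ultimately have "set xs = {0..<m+1}" by (metis card_atLeastLessThan card_subset_eq diff_zero finite_atLeastLessThan)
  then show ?thesis using strict_sorted_equal[OF sorted_wrt_upt assms(1)] by simp
qed

lemma chain_full_len:
  assumes "chain c" "length c = n + 1"
  shows "map len c = [0..<n+1]"
  using nat_list_full[OF chain_lens[OF assms(1)]] assms interval_len unfolding is_chain_def by auto

lemma chain_full_nth:
  assumes "chain c" "length c = n + 1" "i \<le> n"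
  shows "len (c ! i) = i"
proof -
  have "map len c ! i = [0..<n+1] ! i" using chain_full_len[OF assms(1,2)] by simp
  then show ?thesis using assms(2,3) by (simp del: upt_Suc)
qed

lemma chain_full_max:
  assumes "chain c" "length c = n + 1"
  shows "is_maxchain G S g c"
proof -
  have "\<not> (chain c' \<and> set c \<subset> set c')" for c'
  proof
    assume a: "chain c' \<and> set c \<subset> set c'"
    have "card (set c) < card (set c')" using a by (intro psubset_card_mono) auto
    also have "card (set c') = length c'" using chain_distinct a distinct_card by blast
    also have "\<dots> \<le> n + 1" using chain_length a by blast
    finally have "card (set c) < n + 1" .
    moreover have "card (set c) = n + 1" using distinct_card[OF chain_distinct[OF assms(1)]] assms(2) by simp
    ultimately show False by simp
  qed
  then show ?thesis using assms unfolding is_maxchain_def by blast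
qed

lemma chain_unique:
  assumes "chain a" "chain b" "set a = set b"
  shows "a = b"
proof -
  have inj: "inj_on len (set a)"
  proof (rule inj_onI)
    fix x y assume xy: "x \<in> set a" "y \<in> set a" "len x = len y"
    show "x = y"
    proof (rule ccontr)
      assume "x \<noteq> y"
      then obtain i j where "i < length a" "j < length a" "a ! i = x" "a ! j = y" "i \<noteq> j"
        using xy by (metis in_set_conv_nth)
      then have "len x \<noteq> len y" using chain_lens[OF assms(1)] 
        by (metis length_map nat_neq_iff nth_map order_less_irrefl sorted_wrt_nth_less)
      then show False using xy by simp
    qed
  qed
  have "map len a = map len b"
    using strict_sorted_equal[OF chain_lens[OF assms(1)] chain_lens[OF assms(2)]] assms(3) by simp
  then show ?thesis using inj assms(3) by (intro map_inj_on[of len]) auto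
qed

lemma chain_exists:
  assumes "finite A" "A \<subseteq> interval G S g" "\<forall>x\<in>A. \<forall>y\<in>A. ple x y \<or> ple y x"
  shows "\<exists>c. chain c \<and> set c = A"
proof -
  have inj: "inj_on len A"
  proof (rule inj_onI)
    fix x y assume "x \<in> A" "y \<in> A" "len x = len y"
    then show "x = y" using assms(3) pleq_len_eq by metis
  qed
  define h where "h = the_inv_into A len"
  define c where "c = map h (sorted_list_of_set (len ` A))"
  have hl: "\<And>x. x \<in> A \<Longrightarrow> h (len x) = x" unfolding h_def using the_inv_into_f_f[OF inj] by blast
  have hA: "\<And>k. k \<in> len ` A \<Longrightarrow> h k \<in> A \<and> len (h k) = k" using hl by auto
  have "set c = h ` len ` A" unfolding c_def using assms(1) by simp
  also have "\<dots> = A" using hl by (auto simp: image_iff)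
  finally have sc: "set c = A" .
  have "sorted_wrt slt c"
    unfolding c_def sorted_wrt_map
  proof (rule sorted_wrt_mono_rel[OF _ sorted_list_of_set.strict_sorted_key_list_of_set])
    fix k l assume kl: "k \<in> set (sorted_list_of_set (len ` A))" "l \<in> set (sorted_list_of_set (len ` A))" "k < l"
    then have kA: "k \<in> len ` A" "l \<in> len ` A" using assms(1) by auto
    note a = hA[OF kA(1)] hA[OF kA(2)]
    have "\<not> ple (h l) (h k)" using pleq_len a kl(3) by fastforce
    then have "ple (h k) (h l)" using assms(3) a by blast
    moreover have "h k \<noteq> h l" using a kl(3) by auto
    ultimately show "slt (h k) (h l)" by blast
  qed
  then show ?thesis using sc assms(2) unfolding is_chain_def by blast
qed

end

context WF
begin

lemma chain_comparable:
  assumes "chain c" "x \<in> set c" "y \<in> set c"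
  shows "ple x y \<or> ple y x"
proof -
  obtain i j where ij: "i < length c" "j < length c" "c ! i = x" "c ! j = y"
    using assms(2,3) by (metis in_set_conv_nth)
  have sw: "sorted_wrt slt c" using assms(1) unfolding is_chain_def by blast
  have xm: "x \<in> Mon G S" using assms(1,2) interval_Mon unfolding is_chain_def by blast
  consider "i < j" | "i = j" | "j < i" by linarith
  then show ?thesis
  proof cases
    case 1 then show ?thesis using sorted_wrt_nth_less[OF sw 1 ij(2)] ij by blast
  next
    case 2 then show ?thesis using ij pleq_refl xm by blast
  next
    case 3 then show ?thesis using sorted_wrt_nth_less[OF sw 3 ij(1)] ij by blast
  qed
qed

lemma chain_extend:
  assumes c: "chain c" and lc: "length c < n + 1"
  shows "\<exists>c'. chain c' \<and> set c \<subset> set c'"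
proof -
  define A where "A = set c"
  have Ai: "A \<subseteq> interval G S g" using c unfolding is_chain_def A_def by blast
  have Acomp: "\<forall>x\<in>A. \<forall>y\<in>A. ple x y \<or> ple y x" using chain_comparable[OF c] A_def by blast
  have inj: "inj_on len A"
  proof (rule inj_onI)
    fix x y assume "x \<in> A" "y \<in> A" "len x = len y"
    then show "x = y" using Acomp pleq_len_eq by metis
  qed
  have "card (len ` A) = length c" using card_image[OF inj] distinct_card[OF chain_distinct[OF c]] A_def by simp
  then have "card (len ` A) < card {0..n}" using lc by simp
  then have "\<not> {0..n} \<subseteq> len ` A" by (metis card_mono finite_imageI List.finite_set A_def not_le)
  then obtain k where k0: "k \<in> {0..n}" "k \<notin> len ` A" by blast
  then have k: "k \<le> n" "k \<notin> len ` A" by auto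
  have "\<exists>z. z \<in> interval G S g \<and> z \<notin> A \<and> (\<forall>y\<in>A. ple y z \<or> ple z y)"
  proof (cases "k = 0")
    case True
    have "\<one> \<notin> A" using k True by force
    moreover have "\<forall>y\<in>A. ple \<one> y" using Ai interval_Mon pleq_one by blast
    ultimately show ?thesis using one_interval by blast
  next
    case k0: False
    show ?thesis
    proof (cases "k = n")
      case True
      have "g \<notin> A" using k True by force
      moreover have "\<forall>y\<in>A. ple y g" using Ai interval_iff by blast
      ultimately show ?thesis using g_interval by blast
    next
      case kn: False
      define B where "B = insert \<one> (insert g A)"
      have Bi: "B \<subseteq> interval G S g" using Ai one_interval g_interval B_def by auto
      have Bcomp: "\<forall>x\<in>B. \<forall>y\<in>B. ple x y \<or> ple y x"
      proof (intro ballI)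
        fix x y assume xy: "x \<in> B" "y \<in> B"
        have xm: "x \<in> Mon G S" "y \<in> Mon G S" using xy Bi interval_Mon by auto
        have xg: "ple x g" "ple y g" using xy Bi interval_iff by auto
        show "ple x y \<or> ple y x"
          using xy Acomp unfolding B_def
          using pleq_one[OF xm(1)] pleq_one[OF xm(2)] xg by auto
      qed
      define Lo where "Lo = {y\<in>B. len y < k}"
      define Up where "Up = {y\<in>B. k < len y}"
      have finB: "finite B" unfolding B_def A_def by simp
      have Lo_ne: "\<one> \<in> Lo" using k0 unfolding Lo_def B_def by simp
      have Up_ne: "g \<in> Up" using k kn unfolding Up_def B_def by simp
      have fLo: "finite Lo" "finite Up" using finB unfolding Lo_def Up_def by simp_all
      have finLo: "finite (len ` Lo)" "finite (len ` Up)" using fLo by simp_all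
      have neLo: "len ` Lo \<noteq> {}" "len ` Up \<noteq> {}" using Lo_ne Up_ne by blast+
      have "Max (len ` Lo) \<in> len ` Lo" using Max_in[OF finLo(1) neLo(1)] .
      then obtain a where a: "a \<in> Lo" "len a = Max (len ` Lo)" by (metis imageE)
      have "Min (len ` Up) \<in> len ` Up" using Min_in[OF finLo(2) neLo(2)] .
      then obtain b where b: "b \<in> Up" "len b = Min (len ` Up)" by (metis imageE)
      have aLo: "\<forall>y\<in>Lo. len y \<le> len a" using a finLo by simp
      have bUp: "\<forall>y\<in>Up. len b \<le> len y" using b finLo by simp
      have ab: "a \<in> B" "b \<in> B" "len a < k" "k < len b" using a b Lo_def Up_def by auto
      have "ple a b"
      proof -
        have "\<not> ple b a" using pleq_len ab by fastforce
        then show ?thesis using Bcomp ab by blast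
      qed
      moreover have "k - len a \<le> len b - len a" using ab by simp
      ultimately obtain z where z: "ple a z" "ple z b" "len z = len a + (k - len a)"
        using pleq_between[of a b "k - len a"] by blast
      have zk: "len z = k" using z(3) ab by simp
      have "z \<notin> A" using zk k by blast
      moreover have "z \<in> interval G S g" using pleq_trans[OF z(2)] ab Bi interval_iff by blast
      moreover have "\<forall>y\<in>A. ple y z \<or> ple z y"
      proof
        fix y assume yA: "y \<in> A"
        have yB: "y \<in> B" using yA B_def by simp
        have "len y \<noteq> k" using yA k by blast
        then consider "len y < k" | "k < len y" by linarith
        then show "ple y z \<or> ple z y"
        proof cases
          case 1
          then have "len y \<le> len a" using aLo yB Lo_def by blast
          moreover have "ple y a \<or> ple a y" using Bcomp yB ab by blast
          ultimately have "ple y a" using pleq_len pleq_len_eq le_antisym pleq_refl pleqD(1) by metis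
          then show ?thesis using pleq_trans z(1) by blast
        next
          case 2
          then have "len b \<le> len y" using bUp yB Up_def by blast
          moreover have "ple y b \<or> ple b y" using Bcomp yB ab by blast
          ultimately have "ple b y" using pleq_len pleq_len_eq le_antisym pleq_refl pleqD(1) by metis
          then show ?thesis using pleq_trans z(2) by blast
        qed
      qed
      ultimately show ?thesis by blast
    qed
  qed
  then obtain z where z: "z \<in> interval G S g" "z \<notin> A" "\<forall>y\<in>A. ple y z \<or> ple z y" by blast
  have "\<exists>c'. chain c' \<and> set c' = insert z A"
  proof (rule chain_exists)
    show "finite (insert z A)" using A_def by simp
    show "insert z A \<subseteq> interval G S g" using z Ai by auto
    show "\<forall>x\<in>insert z A. \<forall>y\<in>insert z A. ple x y \<or> ple y x"
      using z Acomp pleq_refl interval_Mon by auto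
  qed
  then show ?thesis using z(2) A_def by auto
qed

lemma maxchain_length:
  assumes "is_maxchain G S g c" shows "length c = n + 1"
proof -
  have c: "chain c" using assms unfolding is_maxchain_def by blast
  have "\<not> length c < n + 1" using chain_extend[OF c] assms unfolding is_maxchain_def by blast
  then show ?thesis using chain_length[OF c] by simp
qed

lemma maxchain_exists:
  assumes "chain c" shows "\<exists>c'. is_maxchain G S g c' \<and> set c \<subseteq> set c'"
  using assms
proof (induction "n + 1 - length c" arbitrary: c rule: less_induct)
  case less
  show ?case
  proof (cases "length c = n + 1")
    case True then show ?thesis using chain_full_max less.prems by blast
  next
    case False
    then have "length c < n + 1" using chain_length[OF less.prems] by simp
    then obtain c' where c': "chain c'" "set c \<subset> set c'" using chain_extend less.prems by blast
    have "card (set c) < card (set c')" using c'(2) by (intro psubset_card_mono) auto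
    then have "length c < length c'" using distinct_card chain_distinct c'(1) less.prems by metis
    moreover have "length c' \<le> n + 1" using chain_length[OF c'(1)] .
    ultimately have "n + 1 - length c' < n + 1 - length c" by simp
    then show ?thesis using less.hyps c' by blast
  qed
qed

end

context WF
begin

definition SL :: "('a \<times> real) list \<Rightarrow> real \<Rightarrow> 'a" where
  "SL L s = wprod G (map fst (filter (\<lambda>q. snd q = s) L))"

fun plist :: "('a \<Rightarrow> real) \<Rightarrow> 'a \<Rightarrow> real \<Rightarrow> 'a list \<Rightarrow> ('a \<times> real) list" where
  "plist x prev acc [] = [(inv prev \<otimes> g, acc)]"
| "plist x prev acc (b#bs) = (inv prev \<otimes> b, acc) # plist x b (acc + x b) bs"

definition ptail :: "('a \<Rightarrow> real) \<Rightarrow> real \<Rightarrow> 'a list \<Rightarrow> ('a \<times> real) list" where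
  "ptail x acc bs = (case bs of [] \<Rightarrow> [] | b#bs' \<Rightarrow> plist x b (acc + x b) bs')"

definition clist :: "('a \<Rightarrow> real) \<Rightarrow> 'a list" where
  "clist p = (THE c. chain c \<and> set c = supp p)"

definition fmap :: "('a \<Rightarrow> real) \<Rightarrow> real \<Rightarrow> 'a" where
  "fmap p = SL (plist p \<one> 0 (clist p))"

abbreviation "Op \<equiv> Opts G S g"

lemma g_carrier[simp]: "g \<in> carrier G" using g_Mon by simp

lemma SL_Nil[simp]: "SL [] s = \<one>" by (simp add: SL_def)
lemma SL_Cons: "SL ((a,r)#L) s = (if r = s then a \<otimes> SL L s else SL L s)"
  by (simp add: SL_def)

lemma SL_closed[simp]: "fst ` set L \<subseteq> carrier G \<Longrightarrow> SL L s \<in> carrier G"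
  unfolding SL_def by (rule wprod_closed) auto

lemma SL_append: "fst ` set L \<subseteq> carrier G \<Longrightarrow> fst ` set M \<subseteq> carrier G \<Longrightarrow>
  SL (L @ M) s = SL L s \<otimes> SL M s"
  unfolding SL_def by (simp add: wprod_append, rule wprod_append) auto

lemma SL_notin: "s \<notin> snd ` set L \<Longrightarrow> SL L s = \<one>"
proof -
  assume "s \<notin> snd ` set L"
  then have "filter (\<lambda>q. snd q = s) L = []" by (auto simp: filter_empty_conv)
  then show ?thesis by (simp add: SL_def)
qed

lemma SL_distinct: "distinct (map snd L) \<Longrightarrow> (a, s) \<in> set L \<Longrightarrow> fst ` set L \<subseteq> carrier G \<Longrightarrow> SL L s = a"
proof (induction L)
  case (Cons q L)
  obtain b r where q: "q = (b, r)" by force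
  show ?case
  proof (cases "r = s")
    case True
    then have "a = b" using Cons.prems q by (auto simp: image_iff)
    moreover have "SL L s = \<one>" using Cons.prems q True by (intro SL_notin) auto
    ultimately show ?thesis using q True Cons.prems by (simp add: SL_Cons)
  next
    case False
    then show ?thesis using q Cons by (auto simp: SL_Cons)
  qed
qed simp

lemma plist_split: "plist x prev acc bs = (inv prev \<otimes> hd (bs@[g]), acc) # ptail x acc bs"
  by (cases bs) (auto simp: ptail_def)

lemma plist_carrier: "prev \<in> carrier G \<Longrightarrow> set bs \<subseteq> carrier G \<Longrightarrow> fst ` set (plist x prev acc bs) \<subseteq> carrier G"
  by (induction bs arbitrary: prev acc) auto

lemma ptail_carrier: "set bs \<subseteq> carrier G \<Longrightarrow> fst ` set (ptail x acc bs) \<subseteq> carrier G"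
  by (cases bs) (auto simp: ptail_def plist_carrier)

lemma plist_filter:
  assumes "prev \<in> carrier G" "set bs \<subseteq> carrier G"
  shows "SL (plist x prev acc bs) = SL (plist x prev acc (filter (\<lambda>z. x z \<noteq> 0) bs))"
  using assms
proof (induction bs arbitrary: prev acc)
  case Nil then show ?case by simp
next
  case (Cons b bs)
  show ?case
  proof (cases "x b = 0")
    case False
    have "SL (plist x b (acc + x b) bs) = SL (plist x b (acc + x b) (filter (\<lambda>z. x z \<noteq> 0) bs))"
      using Cons.IH Cons.prems by simp
    then show ?thesis using False by (simp add: fun_eq_iff SL_Cons)
  next
    case True
    have bc: "b \<in> carrier G" "set bs \<subseteq> carrier G" using Cons.prems by auto
    have hc: "hd (bs@[g]) \<in> carrier G" using bc by (cases bs) auto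
    have tc: "fst ` set (ptail x acc bs) \<subseteq> carrier G" using ptail_carrier bc by blast
    have "SL (plist x prev acc (b#bs)) s = SL (plist x prev acc bs) s" for s
    proof -
      have "SL (plist x prev acc (b#bs)) s = SL ((inv prev \<otimes> b, acc) # (inv b \<otimes> hd (bs@[g]), acc) # ptail x acc bs) s"
        using True by (simp add: plist_split[of x b acc bs])
      also have "\<dots> = SL ((inv prev \<otimes> hd (bs@[g]), acc) # ptail x acc bs) s"
      proof -
        have "(inv prev \<otimes> b) \<otimes> ((inv b \<otimes> hd (bs@[g])) \<otimes> SL (ptail x acc bs) s)
              = (inv prev \<otimes> hd (bs@[g])) \<otimes> SL (ptail x acc bs) s"
          using Cons.prems(1) bc hc SL_closed[OF tc] by (simp add: m_assoc[symmetric]) (simp add: m_assoc)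
        then show ?thesis by (cases "acc = s") (simp_all add: SL_Cons)
      qed
      also have "\<dots> = SL (plist x prev acc bs) s" by (simp add: plist_split[of x prev acc bs])
      finally show ?thesis .
    qed
    then have "SL (plist x prev acc (b#bs)) = SL (plist x prev acc bs)" by blast
    also have "\<dots> = SL (plist x prev acc (filter (\<lambda>z. x z \<noteq> 0) bs))" using Cons.IH[OF Cons.prems(1) bc(2)] .
    finally show ?thesis using True by simp
  qed
qed

lemma length_plist[simp]: "length (plist x prev acc bs) = length bs + 1"
  by (induction bs arbitrary: prev acc) auto

lemma plist_nth:
  "i \<le> length bs \<Longrightarrow> plist x prev acc bs ! i =
     (inv ((prev#bs)!i) \<otimes> ((bs@[g])!i), acc + sum_list (map x (take i bs)))"
proof (induction bs arbitrary: prev acc i)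
  case Nil then show ?case by simp
next
  case (Cons b bs)
  show ?case
  proof (cases i)
    case 0 then show ?thesis by simp
  next
    case (Suc j)
    then show ?thesis using Cons by (simp add: add.assoc)
  qed
qed

lemma wprod_plist: "prev \<in> carrier G \<Longrightarrow> set bs \<subseteq> carrier G \<Longrightarrow>
   wprod G (map fst (plist x prev acc bs)) = inv prev \<otimes> g"
proof (induction bs arbitrary: prev acc)
  case Nil then show ?case by simp
next
  case (Cons b bs)
  then show ?case by (simp add: m_assoc[symmetric]) (simp add: m_assoc)
qed

lemma sum_len_plist:
  "sorted_wrt ple (prev#bs) \<Longrightarrow> \<forall>b\<in>set (prev#bs). ple b g \<Longrightarrow>
   sum_list (map len (map fst (plist x prev acc bs))) = n - len prev"
proof (induction bs arbitrary: prev acc)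
  case Nil
  then show ?case using pleqD(4)[of prev g] by simp
next
  case (Cons b bs)
  have pb: "ple prev b" using Cons.prems by simp
  have "sum_list (map len (map fst (plist x b (acc + x b) bs))) = n - len b"
    using Cons.IH Cons.prems by simp
  moreover have "len prev + len (inv prev \<otimes> b) = len b" using pleqD(4)[OF pb] .
  moreover have "len b \<le> n" using pleq_len Cons.prems by simp
  ultimately show ?case by simp
qed

end

context WF
begin

lemma OptsD:
  assumes "p \<in> Op"
  shows "\<And>x. 0 \<le> p x" "finite (supp p)" "supp p \<subseteq> interval G S g"
    "\<forall>x\<in>supp p. \<forall>y\<in>supp p. ple x y \<or> ple y x" "sum p (supp p) = 1"
  using assms unfolding Opts_def by blast+

lemma clist_props:
  assumes "p \<in> Op" shows "chain (clist p)" "set (clist p) = supp p"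
proof -
  obtain c where c: "chain c" "set c = supp p" using chain_exists OptsD[OF assms] by metis
  have "chain (clist p) \<and> set (clist p) = supp p"
    unfolding clist_def by (rule theI[of _ c]) (use c chain_unique in auto)
  then show "chain (clist p)" "set (clist p) = supp p" by auto
qed

lemma clist_eq: "p \<in> Op \<Longrightarrow> chain c \<Longrightarrow> set c = supp p \<Longrightarrow> clist p = c"
proof -
  assume a: "p \<in> Op" "chain c" "set c = supp p"
  show ?thesis using chain_unique[OF clist_props(1)[OF a(1)] a(2)] clist_props(2)[OF a(1)] a(3) by simp
qed

lemma supp_ne: "p \<in> Op \<Longrightarrow> supp p \<noteq> {}"
proof
  assume "p \<in> Op" "supp p = {}"
  then show False using OptsD(5)[of p] by simp
qed

lemma clist_ne: "p \<in> Op \<Longrightarrow> clist p \<noteq> []"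
proof
  assume "p \<in> Op" "clist p = []"
  then show False using clist_props(2)[of p] supp_ne[of p] by simp
qed

lemma clist_pos: "p \<in> Op \<Longrightarrow> x \<in> set (clist p) \<Longrightarrow> 0 < p x"
proof -
  assume a: "p \<in> Op" "x \<in> set (clist p)"
  then have "p x \<noteq> 0" using clist_props(2)[OF a(1)] unfolding supp_def by auto
  then show ?thesis using OptsD(1)[OF a(1), of x] by simp
qed

lemma clist_sum: "p \<in> Op \<Longrightarrow> sum_list (map p (clist p)) = 1"
proof -
  assume a: "p \<in> Op"
  have "sum_list (map p (clist p)) = sum p (set (clist p))"
    using sum_list_distinct_conv_sum_set[OF chain_distinct[OF clist_props(1)[OF a]]] .
  then show ?thesis using clist_props(2)[OF a] OptsD(5)[OF a] by simp
qed

lemma clist_Mon: "p \<in> Op \<Longrightarrow> x \<in> set (clist p) \<Longrightarrow> x \<in> Mon G S"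
  using clist_props interval_Mon unfolding is_chain_def by blast

lemma clist_carrier: "p \<in> Op \<Longrightarrow> set (clist p) \<subseteq> carrier G"
proof -
  assume a: "p \<in> Op"
  show ?thesis
  proof
    fix x assume "x \<in> set (clist p)"
    then show "x \<in> carrier G" by (rule Mon_carrier'[OF clist_Mon[OF a]])
  qed
qed

lemma inv_mult_one: "a \<in> carrier G \<Longrightarrow> b \<in> carrier G \<Longrightarrow> inv a \<otimes> b = \<one> \<Longrightarrow> a = b"
proof -
  assume a: "a \<in> carrier G" "b \<in> carrier G" "inv a \<otimes> b = \<one>"
  have "b = a \<otimes> (inv a \<otimes> b)" using a(1,2) by (simp add: m_assoc[symmetric])
  then show "a = b" using a by simp
qed

lemma chain_Mon: "chain c \<Longrightarrow> x \<in> set c \<Longrightarrow> x \<in> Mon G S"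
  unfolding is_chain_def using interval_Mon by blast

lemma chain_carrier: "chain c \<Longrightarrow> set c \<subseteq> carrier G"
proof
  fix x assume "chain c" "x \<in> set c" then show "x \<in> carrier G" by (rule Mon_carrier'[OF chain_Mon])
qed

lemma fmap_chain:
  assumes "p \<in> Op" "chain c" "supp p \<subseteq> set c"
  shows "fmap p = SL (plist p \<one> 0 c)"
proof -
  have cc: "set c \<subseteq> carrier G" using chain_carrier[OF assms(2)] .
  have "chain (filter (\<lambda>z. p z \<noteq> 0) c)"
    using assms(2) sorted_wrt_filter unfolding is_chain_def by fastforce
  moreover have "set (filter (\<lambda>z. p z \<noteq> 0) c) = supp p" using assms(3) unfolding supp_def by auto
  ultimately have "clist p = filter (\<lambda>z. p z \<noteq> 0) c" using clist_eq assms(1) by blast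
  then show ?thesis unfolding fmap_def using plist_filter[OF _ cc] by simp
qed

definition cpos :: "('a \<Rightarrow> real) \<Rightarrow> nat \<Rightarrow> real" where
  "cpos p i = sum_list (map p (take i (clist p)))"

lemma cpos_0[simp]: "cpos p 0 = 0" by (simp add: cpos_def)

lemma cpos_last: "p \<in> Op \<Longrightarrow> cpos p (length (clist p)) = 1"
  using clist_sum by (simp add: cpos_def)

lemma cpos_Suc: "i < length (clist p) \<Longrightarrow> cpos p (Suc i) = cpos p i + p (clist p ! i)"
  by (simp add: cpos_def take_Suc_conv_app_nth)

lemma cpos_strict:
  assumes "p \<in> Op" "i < j" "j \<le> length (clist p)"
  shows "cpos p i < cpos p j"
  using assms(2,3)
proof (induction j)
  case 0 then show ?case by simp
next
  case (Suc j)
  have "0 < p (clist p ! j)" using clist_pos[OF assms(1)] Suc.prems by simp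
  then have "cpos p j < cpos p (Suc j)" using cpos_Suc Suc.prems by simp
  then show ?case using Suc by (cases "i = j") auto
qed

lemma cpos_mono:
  assumes "p \<in> Op" "i \<le> j" "j \<le> length (clist p)"
  shows "cpos p i \<le> cpos p j"
  using cpos_strict[OF assms(1)] assms by (cases "i = j") (auto intro: less_imp_le)

lemma cpos_range:
  assumes "p \<in> Op" "i \<le> length (clist p)"
  shows "0 \<le> cpos p i" "cpos p i \<le> 1"
  using cpos_mono[OF assms(1), of 0 i] cpos_mono[OF assms(1), of i "length (clist p)"] cpos_last[OF assms(1)] assms
  by auto

abbreviation "Lp p \<equiv> plist p \<one> 0 (clist p)"

lemma Lp_nth:
  assumes "i \<le> length (clist p)"
  shows "Lp p ! i = (inv ((\<one> # clist p)!i) \<otimes> ((clist p @ [g])!i), cpos p i)"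
  using plist_nth[OF assms] by (simp add: cpos_def)

lemma Lp_snd: "map snd (Lp p) = map (cpos p) [0..<length (clist p) + 1]"
  by (rule nth_equalityI) (auto simp: Lp_nth simp del: upt_Suc)

lemma Lp_distinct: "p \<in> Op \<Longrightarrow> distinct (map snd (Lp p))"
proof -
  assume p: "p \<in> Op"
  have "inj_on (cpos p) {0..<length (clist p) + 1}"
    by (rule inj_onI) (metis atLeastLessThan_iff cpos_strict[OF p] less_Suc_eq_le linorder_neqE_nat
        order_less_irrefl Suc_eq_plus1)
  then show ?thesis unfolding Lp_snd by (simp add: distinct_map del: upt_Suc)
qed

lemma Lp_carrier: "p \<in> Op \<Longrightarrow> fst ` set (Lp p) \<subseteq> carrier G"
  using plist_carrier clist_carrier by auto

lemma fmap_at: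
  assumes "p \<in> Op" "i \<le> length (clist p)"
  shows "fmap p (cpos p i) = inv ((\<one> # clist p)!i) \<otimes> ((clist p @ [g])!i)"
proof -
  have "Lp p ! i \<in> set (Lp p)" using assms by simp
  then have "(inv ((\<one> # clist p)!i) \<otimes> ((clist p @ [g])!i), cpos p i) \<in> set (Lp p)"
    using Lp_nth[OF assms(2)] by simp
  then show ?thesis unfolding fmap_def using SL_distinct Lp_distinct[OF assms(1)] Lp_carrier[OF assms(1)] by blast
qed

lemma fmap_notat:
  assumes "s \<notin> cpos p ` {0..length (clist p)}"
  shows "fmap p s = \<one>"
proof -
  have "snd ` set (Lp p) = set (map snd (Lp p))" by simp
  also have "\<dots> = cpos p ` set [0..<length (clist p) + 1]" unfolding Lp_snd by (simp del: upt_Suc)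
  also have "set [0..<length (clist p) + 1] = {0..length (clist p)}" by auto
  finally show ?thesis unfolding fmap_def using SL_notin assms by auto
qed

lemma clist_strict:
  assumes "p \<in> Op" "i < j" "j < length (clist p)"
  shows "ple (clist p ! i) (clist p ! j)" "clist p ! i \<noteq> clist p ! j"
  using sorted_wrt_nth_less[OF _ assms(2,3), of slt] clist_props(1)[OF assms(1)]
  unfolding is_chain_def by auto

lemma label_nontriv:
  assumes "p \<in> Op" "1 \<le> i" "i < length (clist p)"
  shows "inv ((\<one> # clist p)!i) \<otimes> ((clist p @ [g])!i) \<noteq> \<one>"
proof -
  have e: "(\<one> # clist p)!i = clist p ! (i - 1)" "(clist p @ [g])!i = clist p ! i"
    using assms by (auto simp: nth_append nth_Cons')
  have ne: "clist p ! (i - 1) \<noteq> clist p ! i" using clist_strict(2)[OF assms(1), of "i - 1" i] assms by simp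
  have c: "clist p ! (i - 1) \<in> carrier G" "clist p ! i \<in> carrier G"
    using clist_carrier[OF assms(1)] assms by auto
  show ?thesis unfolding e
  proof
    assume "inv (clist p ! (i - 1)) \<otimes> clist p ! i = \<one>"
    then show False using inv_mult_one[OF c] ne by simp
  qed
qed

end

context WF
begin

lemma cpos_lt1: "p \<in> Op \<Longrightarrow> i < length (clist p) \<Longrightarrow> cpos p i < 1"
  using cpos_strict[of p i "length (clist p)"] cpos_last by simp

lemma cpos_gt0: "p \<in> Op \<Longrightarrow> 0 < i \<Longrightarrow> i \<le> length (clist p) \<Longrightarrow> 0 < cpos p i"
  using cpos_strict[of p 0 i] by simp

lemma nth_one_Cons: "1 \<le> i \<Longrightarrow> i \<le> length a \<Longrightarrow> (\<one> # a) ! i = a ! (i - 1)"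
  by (cases i) auto

lemma nth_app_g: "i < length a \<Longrightarrow> (a @ [g]) ! i = a ! i"
  by (simp add: nth_append)

lemma NT_eq:
  assumes p: "p \<in> Op"
  shows "{s. 0 < s \<and> s < 1 \<and> fmap p s \<noteq> \<one>} = cpos p ` {1..<length (clist p)}"
proof
  show "{s. 0 < s \<and> s < 1 \<and> fmap p s \<noteq> \<one>} \<subseteq> cpos p ` {1..<length (clist p)}"
  proof
    fix s assume s: "s \<in> {s. 0 < s \<and> s < 1 \<and> fmap p s \<noteq> \<one>}"
    then have "s \<in> cpos p ` {0..length (clist p)}" using fmap_notat by blast
    then obtain i where i: "i \<le> length (clist p)" "s = cpos p i" by auto
    have "i \<noteq> 0"
    proof
      assume "i = 0" then show False using i s by simp
    qed
    moreover have "i \<noteq> length (clist p)" using i s cpos_last[OF p] by auto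
    ultimately show "s \<in> cpos p ` {1..<length (clist p)}" using i by auto
  qed
next
  show "cpos p ` {1..<length (clist p)} \<subseteq> {s. 0 < s \<and> s < 1 \<and> fmap p s \<noteq> \<one>}"
  proof
    fix s assume "s \<in> cpos p ` {1..<length (clist p)}"
    then obtain i where i: "1 \<le> i" "i < length (clist p)" "s = cpos p i" by auto
    have "0 < s" "s < 1" using cpos_gt0[OF p, of i] cpos_lt1[OF p, of i] i by auto
    moreover have "fmap p s \<noteq> \<one>" using fmap_at[OF p, of i] label_nontriv[OF p i(1,2)] i by simp
    ultimately show "s \<in> {s. 0 < s \<and> s < 1 \<and> fmap p s \<noteq> \<one>}" by simp
  qed
qed

lemma cpos_sorted: "p \<in> Op \<Longrightarrow> sorted_wrt (<) (map (cpos p) [a..<b]) \<or> b > length (clist p) + 1"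
  by (cases "b > length (clist p) + 1") (auto simp: sorted_wrt_map intro!: sorted_wrt_mono_rel[OF _ sorted_wrt_upt] cpos_strict)

lemma cpos_sorted': "p \<in> Op \<Longrightarrow> b \<le> length (clist p) + 1 \<Longrightarrow> sorted_wrt (<) (map (cpos p) [a..<b])"
  using cpos_sorted by fastforce

lemma wpts_fmap:
  assumes p: "p \<in> Op"
  shows "wpts G (fmap p) = map (cpos p) [0..<length (clist p) + 1]"
proof -
  define m where "m = length (clist p)"
  have m1: "1 \<le> m" using clist_ne[OF p] m_def by (cases "clist p") auto
  have "{0, 1} \<union> {t. 0 < t \<and> t < 1 \<and> fmap p t \<noteq> \<one>} = cpos p ` {0..m}"
  proof -
    have "cpos p ` {0..m} = insert (cpos p 0) (insert (cpos p m) (cpos p ` {1..<m}))"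
    proof -
      have "{0..m} = insert 0 (insert m {1..<m})" using m1 by auto
      then show ?thesis by simp
    qed
    then show ?thesis using NT_eq[OF p] cpos_last[OF p] m_def by auto
  qed
  also have "\<dots> = set (map (cpos p) [0..<m + 1])"
  proof -
    have "set [0..<m + 1] = {0..m}" by auto
    then show ?thesis by (simp del: upt_Suc)
  qed
  finally have e: "{0, 1} \<union> {t. 0 < t \<and> t < 1 \<and> fmap p t \<noteq> \<one>} = set (map (cpos p) [0..<m + 1])" .
  have ss: "sorted_list_of_set (set (map (cpos p) [0..<m + 1])) = map (cpos p) [0..<m + 1]"
    by (rule strict_sorted_equal[OF cpos_sorted'[OF p] sorted_list_of_set.strict_sorted_key_list_of_set])
       (simp_all add: m_def del: upt_Suc)
  have "wpts G (fmap p) = sorted_list_of_set (set (map (cpos p) [0..<m + 1]))" unfolding wpts_def e ..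
  then show ?thesis using ss m_def by simp
qed

lemma chain_ple_sorted:
  assumes c: "chain a" shows "sorted_wrt ple (\<one> # a @ [g])"
proof -
  have am: "\<forall>x\<in>set a. x \<in> Mon G S \<and> ple x g" using c interval_Mon interval_iff unfolding is_chain_def by blast
  have "sorted_wrt ple a" using c unfolding is_chain_def by (auto elim: sorted_wrt_mono_rel[rotated])
  then show ?thesis using am pleq_one pleq_one[OF g_Mon] by (auto simp: sorted_wrt_append)
qed

lemma fmap_WFactI:
  assumes p: "p \<in> Op"
  shows "fmap p \<in> WFactI G S g"
proof -
  define a where "a = clist p"
  define m where "m = length a"
  have m1: "1 \<le> m" using clist_ne[OF p] m_def a_def by (cases "clist p") auto
  have c: "chain a" using clist_props[OF p] a_def by simp
  have out: "\<forall>t. t \<notin> {0..1} \<longrightarrow> fmap p t = \<one>"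
  proof (intro allI impI)
    fix t assume t: "t \<notin> {0..(1::real)}"
    have "t \<notin> cpos p ` {0..length (clist p)}" using cpos_range[OF p] t by auto
    then show "fmap p t = \<one>" using fmap_notat by blast
  qed
  have fin: "finite {t. fmap p t \<noteq> \<one>}"
  proof (rule finite_subset)
    show "{t. fmap p t \<noteq> \<one>} \<subseteq> cpos p ` {0..length (clist p)}" using fmap_notat by blast
  qed simp
  have mapw: "map (fmap p) (wpts G (fmap p)) = map fst (Lp p)"
    unfolding wpts_fmap[OF p]
    by (rule nth_equalityI) (auto simp: fmap_at[OF p] Lp_nth simp del: upt_Suc)
  have sw: "sorted_wrt ple (\<one> # a @ [g])" using chain_ple_sorted[OF c] .
  have lf: "lin_fact G S g (map fst (Lp p))"
    unfolding lin_fact_def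
  proof (intro conjI allI impI)
    show "2 \<le> length (map fst (Lp p))" using m1 m_def a_def by simp
    show "set (map fst (Lp p)) \<subseteq> Mon G S"
    proof
      fix y assume "y \<in> set (map fst (Lp p))"
      then obtain i where i: "i < length (Lp p)" "y = fst (Lp p ! i)" by (auto simp: in_set_conv_nth)
      have il: "i \<le> m" using i m_def a_def by simp
      have y: "y = inv ((\<one> # a)!i) \<otimes> ((a @ [g])!i)" using i Lp_nth[of i p] il m_def a_def by simp
      have "ple ((\<one> # a @ [g])!i) ((\<one> # a @ [g])!(Suc i))"
        using sorted_wrt_nth_less[OF sw, of i "Suc i"] il m_def by simp
      moreover have "(\<one> # a @ [g])!i = (\<one> # a)!i" using il m_def by (cases i) (auto simp: nth_append)
      moreover have "(\<one> # a @ [g])!(Suc i) = (a @ [g])!i" by simp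
      ultimately show "y \<in> Mon G S" using pleqD(3) y by metis
    qed
    fix i assume i: "0 < i \<and> i + 1 < length (map fst (Lp p))"
    then have "1 \<le> i" "i < length (clist p)" by auto
    then show "map fst (Lp p) ! i \<noteq> \<one>" using label_nontriv[OF p] Lp_nth[of i p] by simp
  next
    have "\<forall>b\<in>set (\<one> # a). ple b g" using pleq_one[OF g_Mon] c interval_iff unfolding is_chain_def by auto
    moreover have "sorted_wrt ple (\<one> # a)" using sw by (simp add: sorted_wrt_append)
    ultimately show "sum_list (map len (map fst (Lp p))) = n"
      using sum_len_plist[of \<one> a p 0] a_def by simp
  next
    show "wprod G (map fst (Lp p)) = g" using wprod_plist[of \<one> "clist p" p 0] clist_carrier[OF p] by simp
  qed
  show ?thesis unfolding WFactI_def using out fin mapw lf by simp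
qed

end

context WF
begin

lemma Kequiv_iff:
  assumes p: "p \<in> Op" and q: "q \<in> Op"
  shows "Kequiv G S g p q \<longleftrightarrow>
     (length (clist p) = length (clist q) \<and>
      (\<forall>i<length (clist p). p (clist p ! i) = q (clist q ! i)) \<and>
      (\<forall>i. 0 < i \<and> i < length (clist p) \<longrightarrow>
          inv (clist p ! (i - 1)) \<otimes> (clist p ! i) = inv (clist q ! (i - 1)) \<otimes> (clist q ! i)))"
  (is "?L \<longleftrightarrow> ?R")
proof
  assume ?L
  then obtain a b where ab: "chain a" "chain b" "set a = supp p" "set b = supp q" "length a = length b"
      "\<forall>i<length a. p (a ! i) = q (b ! i)"
      "\<forall>i. 0 < i \<and> i < length a \<longrightarrow>
          inv (a ! (i - 1)) \<otimes> (a ! i) = inv (b ! (i - 1)) \<otimes> (b ! i)"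
    unfolding Kequiv_def by blast
  have "a = clist p" "b = clist q" using clist_eq[OF p ab(1,3)] clist_eq[OF q ab(2,4)] by auto
  then show ?R using ab by simp
next
  assume ?R
  then show ?L unfolding Kequiv_def using clist_props[OF p] clist_props[OF q] by blast
qed

lemma cpos_eq_take: "length (clist p) = length (clist q) \<Longrightarrow> (\<forall>i<length (clist p). p (clist p ! i) = q (clist q ! i))
   \<Longrightarrow> cpos p i = cpos q i"
proof -
  assume a: "length (clist p) = length (clist q)" "\<forall>i<length (clist p). p (clist p ! i) = q (clist q ! i)"
  have "map p (take i (clist p)) = map q (take i (clist q))"
    by (rule nth_equalityI) (use a in auto)
  then show ?thesis by (simp add: cpos_def)
qed

lemma K_imp_S:
  assumes p: "p \<in> Op" and q: "q \<in> Op" and K: "Kequiv G S g p q"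
  shows "Sequiv (fmap p) (fmap q)"
proof -
  note R = Kequiv_iff[OF p q, THEN iffD1, OF K]
  define m where "m = length (clist p)"
  have mq: "m = length (clist q)" using R m_def by simp
  have cp: "\<And>i. cpos p i = cpos q i" using cpos_eq_take R by blast
  show ?thesis unfolding Sequiv_def
  proof (intro allI impI)
    fix s :: real assume s: "0 < s \<and> s < 1"
    show "fmap p s = fmap q s"
    proof (cases "s \<in> cpos p ` {0..m}")
      case False
      then have "s \<notin> cpos q ` {0..length (clist q)}" using cp mq by auto
      then show ?thesis using fmap_notat False m_def by metis
    next
      case True
      then obtain i where i: "i \<le> m" "s = cpos p i" by auto
      have i0: "i \<noteq> 0" using i s by (metis cpos_0 less_irrefl)
      have im: "i \<noteq> m" using i s cpos_last[OF p] m_def by auto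
      have e1: "fmap p s = inv (clist p ! (i - 1)) \<otimes> clist p ! i"
        using fmap_at[OF p, of i] i i0 im m_def nth_one_Cons[of i] nth_app_g[of i] by simp
      have e2: "fmap q s = inv (clist q ! (i - 1)) \<otimes> clist q ! i"
        using fmap_at[OF q, of i] i i0 im mq cp nth_one_Cons[of i] nth_app_g[of i] by simp
      show ?thesis using e1 e2 R i i0 im m_def by simp
    qed
  qed
qed

lemma S_imp_K:
  assumes p: "p \<in> Op" and q: "q \<in> Op" and Sq: "Sequiv (fmap p) (fmap q)"
  shows "Kequiv G S g p q"
proof -
  define m where "m = length (clist p)"
  define m' where "m' = length (clist q)"
  have "{s. 0 < s \<and> s < 1 \<and> fmap p s \<noteq> \<one>} = {s. 0 < s \<and> s < 1 \<and> fmap q s \<noteq> \<one>}"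
    using Sq unfolding Sequiv_def by auto
  then have "set (map (cpos p) [1..<m]) = set (map (cpos q) [1..<m'])"
    using NT_eq[OF p] NT_eq[OF q] m_def m'_def by simp
  then have eqs: "map (cpos p) [1..<m] = map (cpos q) [1..<m']"
    using strict_sorted_equal[OF cpos_sorted'[OF q, of m' 1] cpos_sorted'[OF p, of m 1]] m_def m'_def by simp
  have m1: "1 \<le> m" "1 \<le> m'" using clist_ne[OF p] clist_ne[OF q] m_def m'_def
    by (simp_all add: Suc_le_eq)
  have mm: "m = m'" using arg_cong[OF eqs, of length] m1 by simp
  have cpi: "cpos p i = cpos q i" if im: "i \<le> m" for i
  proof -
    consider "i = 0" | "i = m" | "1 \<le> i \<and> i < m" using im by linarith
    then show ?thesis
    proof cases
      case 1 then show ?thesis by simp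
    next
      case 2 then show ?thesis using cpos_last[OF p] cpos_last[OF q] m_def m'_def mm by simp
    next
      case 3
      have l1: "i - 1 < m - 1" using 3 by linarith
      have "map (cpos p) [1..<m] ! (i - 1) = cpos p (1 + (i - 1))" using l1 by simp
      moreover have "map (cpos q) [1..<m'] ! (i - 1) = cpos q (1 + (i - 1))" using l1 mm by simp
      moreover have "1 + (i - 1) = i" using 3 by simp
      ultimately show ?thesis using eqs by metis
    qed
  qed
  have w: "\<forall>i<m. p (clist p ! i) = q (clist q ! i)"
  proof (intro allI impI)
    fix i assume i: "i < m"
    have "p (clist p ! i) = cpos p (Suc i) - cpos p i" using cpos_Suc[of i p] i m_def by simp
    also have "\<dots> = cpos q (Suc i) - cpos q i" using cpi[of i] cpi[of "Suc i"] i by simp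
    also have "\<dots> = q (clist q ! i)" using cpos_Suc[of i q] i mm m'_def by simp
    finally show "p (clist p ! i) = q (clist q ! i)" .
  qed
  have l: "\<forall>i. 0 < i \<and> i < m \<longrightarrow>
          inv (clist p ! (i - 1)) \<otimes> (clist p ! i) = inv (clist q ! (i - 1)) \<otimes> (clist q ! i)"
  proof (intro allI impI)
    fix i assume i: "0 < i \<and> i < m"
    have s: "0 < cpos p i" "cpos p i < 1" using cpos_gt0[OF p, of i] cpos_lt1[OF p, of i] i m_def by auto
    have "inv (clist p ! (i - 1)) \<otimes> (clist p ! i) = fmap p (cpos p i)"
      using fmap_at[OF p, of i] i m_def nth_one_Cons[of i] nth_app_g[of i] by simp
    also have "\<dots> = fmap q (cpos p i)" using Sq s unfolding Sequiv_def by blast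
    also have "\<dots> = fmap q (cpos q i)" using cpi[of i] i by simp
    also have "\<dots> = inv (clist q ! (i - 1)) \<otimes> (clist q ! i)"
      using fmap_at[OF q, of i] i mm m'_def nth_one_Cons[of i] nth_app_g[of i] by simp
    finally show "inv (clist p ! (i - 1)) \<otimes> (clist p ! i) = inv (clist q ! (i - 1)) \<otimes> (clist q ! i)" .
  qed
  show ?thesis using Kequiv_iff[OF p q] w l mm m_def m'_def by simp
qed

lemma K_iff_S: "p \<in> Op \<Longrightarrow> q \<in> Op \<Longrightarrow> Kequiv G S g p q \<longleftrightarrow> Sequiv (fmap p) (fmap q)"
  using K_imp_S S_imp_K by blast

end

context WF
begin

lemma comp_filter: "[fs ! i. i \<leftarrow> xs, P i] = map (\<lambda>i. fs ! i) (filter P xs)"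
  by (induction xs) auto

lemma zip_nth_map: "length t = length fs \<Longrightarrow> zip fs t = map (\<lambda>i. (fs ! i, t ! i)) [0..<length fs]"
  by (rule nth_equalityI) auto

lemma realize_SL: "length t = length fs \<Longrightarrow> realize G fs t = SL (zip fs t)"
proof (rule ext)
  fix s assume l: "length t = length fs"
  show "realize G fs t s = SL (zip fs t) s"
    unfolding realize_def SL_def comp_filter zip_nth_map[OF l]
    by (simp add: filter_map comp_def)
qed

lemma SL_map_const: "SL (map (\<lambda>l. (l, r)) w) s = (if r = s then wprod G w else \<one>)"
  unfolding SL_def by (auto simp: filter_map comp_def)

lemma SL_split:
  assumes "length ws = length L" "\<forall>i<length L. wprod G (ws!i) = fst (L!i) \<and> set (ws!i) \<subseteq> carrier G"
  shows "SL (concat (map2 (\<lambda>w q. map (\<lambda>l. (l, snd q)) w) ws L)) = SL L"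
  using assms
proof (induction ws L rule: list_induct2)
  case Nil then show ?case by simp
next
  case (Cons w ws q L)
  have h: "wprod G w = fst q" "set w \<subseteq> carrier G" using Cons.prems[rule_format, of 0] by auto
  have t: "\<forall>i<length L. wprod G (ws!i) = fst (L!i) \<and> set (ws!i) \<subseteq> carrier G"
    using Cons.prems by force
  have tc: "fst ` set L \<subseteq> carrier G"
  proof
    fix y assume "y \<in> fst ` set L"
    then obtain i where "i < length L" "y = fst (L ! i)" by (auto simp: in_set_conv_nth)
    then show "y \<in> carrier G" using t wprod_closed by metis
  qed
  have tc2: "fst ` set (concat (map2 (\<lambda>w q. map (\<lambda>l. (l, snd q)) w) ws L)) \<subseteq> carrier G"
  proof
    fix y assume "y \<in> fst ` set (concat (map2 (\<lambda>w q. map (\<lambda>l. (l, snd q)) w) ws L))"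
    then obtain w' q' where wq: "(w', q') \<in> set (zip ws L)" "y \<in> set w'" by auto
    then obtain i where "i < length L" "w' = ws ! i" using Cons.hyps by (auto simp: in_set_conv_nth)
    then show "y \<in> carrier G" using t wq by auto
  qed
  have "SL (concat (map2 (\<lambda>w q. map (\<lambda>l. (l, snd q)) w) (w#ws) (q#L))) s = SL (q#L) s" for s
  proof -
    have "SL (concat (map2 (\<lambda>w q. map (\<lambda>l. (l, snd q)) w) (w#ws) (q#L))) s
        = SL (map (\<lambda>l. (l, snd q)) w) s \<otimes> SL (concat (map2 (\<lambda>w q. map (\<lambda>l. (l, snd q)) w) ws L)) s"
    proof -
      have "fst ` set (map (\<lambda>l. (l, snd q)) w) \<subseteq> carrier G" using h(2) by auto
      from SL_append[OF this tc2] show ?thesis by simp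
    qed
    also have "\<dots> = SL (map (\<lambda>l. (l, snd q)) w) s \<otimes> SL L s" using Cons.IH[OF t] by simp
    also have "\<dots> = SL (q#L) s" using h SL_closed[OF tc]
      by (cases q) (auto simp: SL_map_const SL_Cons)
    finally show ?thesis .
  qed
  then show ?case by blast
qed

definition blocksum :: "('a \<times> real) list \<Rightarrow> real \<Rightarrow> nat" where
  "blocksum L s = sum_list (map (len \<circ> fst) (filter (\<lambda>q. snd q = s) L))"

definition expand :: "('a \<times> real) list \<Rightarrow> real list" where
  "expand L = concat (map (\<lambda>q. replicate (len (fst q)) (snd q)) L)"

lemma wprod_ones: "\<forall>x\<in>set xs. x = \<one> \<Longrightarrow> wprod G xs = \<one>"
  by (induction xs) auto

lemma wprod_ones_app: "\<forall>x\<in>set xs. x = \<one> \<Longrightarrow> y \<in> carrier G \<Longrightarrow> set ys \<subseteq> carrier G \<Longrightarrow>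
  wprod G (xs @ y # ys) = y \<otimes> wprod G ys"
  by (induction xs) auto

lemma SL_group_prod:
  assumes "sorted (map snd L)" "sorted_wrt (<) D" "snd ` set L \<subseteq> set D" "fst ` set L \<subseteq> carrier G"
  shows "wprod G (map (SL L) D) = wprod G (map fst L)"
  using assms
proof (induction L arbitrary: D)
  case Nil
  then show ?case by (simp add: wprod_ones)
next
  case (Cons q L)
  obtain f r where q: "q = (f, r)" by force
  have rD: "r \<in> set D" using Cons.prems q by auto
  obtain D1 D2 where D: "D = D1 @ r # D2" using split_list[OF rD] by blast
  have D1lt: "\<forall>x\<in>set D1. x < r" using Cons.prems(2) D by (auto simp: sorted_wrt_append)
  have D2gt: "\<forall>x\<in>set D2. r < x" using Cons.prems(2) D by (auto simp: sorted_wrt_append)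
  have Lge: "\<forall>y\<in>snd ` set L. r \<le> y" using Cons.prems(1) q by auto
  have fc: "f \<in> carrier G" and Lc: "fst ` set L \<subseteq> carrier G" using Cons.prems(4) q by auto
  have one1: "\<forall>x\<in>set D1. SL (q#L) x = \<one>"
  proof
    fix x assume "x \<in> set D1"
    then have "x < r" using D1lt by blast
    then have "x \<notin> snd ` set (q#L)" using Lge q by force
    then show "SL (q#L) x = \<one>" by (rule SL_notin)
  qed
  have one1': "\<forall>x\<in>set D1. SL L x = \<one>"
  proof
    fix x assume "x \<in> set D1"
    then have "x < r" using D1lt by blast
    then have "x \<notin> snd ` set L" using Lge by force
    then show "SL L x = \<one>" by (rule SL_notin)
  qed
  have eq2: "map (SL (q#L)) D2 = map (SL L) D2"
    using D2gt q by (auto simp: SL_Cons)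
  have c2: "set (map (SL L) D2) \<subseteq> carrier G" using Lc by auto
  have "wprod G (map (SL L) D) = wprod G (map fst L)"
    using Cons.IH[of D] Cons.prems by simp
  moreover have "wprod G (map (SL L) D) = SL L r \<otimes> wprod G (map (SL L) D2)"
    using D one1' c2 Lc by (simp add: wprod_ones_app)
  moreover have "wprod G (map (SL (q#L)) D) = SL (q#L) r \<otimes> wprod G (map (SL L) D2)"
  proof -
    have "SL (q#L) r \<in> carrier G" using fc Lc q by (intro SL_closed) auto
    moreover have "set (map (SL (q#L)) D2) \<subseteq> carrier G" using c2 eq2 by metis
    ultimately have "wprod G (map (SL (q#L)) D) = SL (q#L) r \<otimes> wprod G (map (SL (q#L)) D2)"
      using D one1 by (simp add: wprod_ones_app)
    then show ?thesis unfolding eq2 .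
  qed
  moreover have "SL (q#L) r = f \<otimes> SL L r" using q by (simp add: SL_Cons)
  ultimately show ?case using q fc Lc c2 by (simp add: m_assoc)
qed

lemma blocksum_Cons: "blocksum ((f, r) # L) s = (if r = s then len f else 0) + blocksum L s"
  by (simp add: blocksum_def)

lemma blocksum_notin: "s \<notin> snd ` set L \<Longrightarrow> blocksum L s = 0"
proof -
  assume "s \<notin> snd ` set L"
  then have "filter (\<lambda>q. snd q = s) L = []" by (auto simp: filter_empty_conv)
  then show ?thesis by (simp add: blocksum_def)
qed

lemma sum_list_delta: "distinct D \<Longrightarrow> r \<in> set D \<Longrightarrow> sum_list (map (\<lambda>s. if r = s then (c::nat) else 0) D) = c"
  by (induction D) (auto simp: sum_list_eq_0_iff)

lemma blocksum_total:
  assumes "distinct D" "snd ` set L \<subseteq> set D"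
  shows "sum_list (map (blocksum L) D) = sum_list (map (len \<circ> fst) L)"
  using assms
proof (induction L)
  case Nil then show ?case by (simp add: blocksum_def)
next
  case (Cons q L)
  obtain f r where q: "q = (f, r)" by force
  have "sum_list (map (blocksum (q#L)) D) =
        sum_list (map (\<lambda>s. if r = s then len f else 0) D) + sum_list (map (blocksum L) D)"
  proof -
    have "blocksum (q#L) = (\<lambda>s. (if r = s then len f else 0) + blocksum L s)"
      using q by (simp add: fun_eq_iff blocksum_Cons)
    then show ?thesis by (simp only: sum_list_addf)
  qed
  also have "\<dots> = len f + sum_list (map (len \<circ> fst) L)"
    using sum_list_delta[OF Cons.prems(1)] Cons q by (simp add: comp_def)
  finally show ?case using q by (simp add: comp_def)
qed

lemma expand_group:
  assumes "sorted (map snd L)" "sorted_wrt (<) D" "snd ` set L \<subseteq> set D"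
  shows "concat (map (\<lambda>s. replicate (blocksum L s) s) D) = expand L"
  using assms
proof (induction L arbitrary: D)
  case Nil
  then show ?case by (simp add: blocksum_def expand_def)
next
  case (Cons q L)
  obtain f r where q: "q = (f, r)" by force
  have rD: "r \<in> set D" using Cons.prems q by auto
  obtain D1 D2 where D: "D = D1 @ r # D2" using split_list[OF rD] by blast
  have D1lt: "\<forall>x\<in>set D1. x < r" using Cons.prems(2) D by (auto simp: sorted_wrt_append)
  have D2gt: "\<forall>x\<in>set D2. r < x" using Cons.prems(2) D by (auto simp: sorted_wrt_append)
  have Lge: "\<forall>y\<in>snd ` set L. r \<le> y" using Cons.prems(1) q by auto
  have z1: "\<forall>x\<in>set D1. blocksum (q#L) x = 0 \<and> blocksum L x = 0"
  proof
    fix x assume "x \<in> set D1"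
    then have "x < r" using D1lt by blast
    then have "x \<notin> snd ` set (q#L)" "x \<notin> snd ` set L" using Lge q by force+
    then show "blocksum (q#L) x = 0 \<and> blocksum L x = 0" using blocksum_notin by blast
  qed
  have e1: "concat (map (\<lambda>s. replicate (blocksum (q#L) s) s) D1) = []"
    "concat (map (\<lambda>s. replicate (blocksum L s) s) D1) = []" using z1 by auto
  have eq2: "map (\<lambda>s. replicate (blocksum (q#L) s) s) D2 = map (\<lambda>s. replicate (blocksum L s) s) D2"
    using D2gt q by (auto simp: blocksum_Cons)
  have IH: "concat (map (\<lambda>s. replicate (blocksum L s) s) D) = expand L"
    using Cons.IH[of D] Cons.prems by simp
  have "concat (map (\<lambda>s. replicate (blocksum (q#L) s) s) D)
      = replicate (len f) r @ concat (map (\<lambda>s. replicate (blocksum L s) s) D)"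
  proof -
    have A: "concat (map F D) = concat (map F D1) @ F r @ concat (map F D2)" for F :: "real \<Rightarrow> real list"
      by (simp add: D)
    have br: "blocksum (q#L) r = len f + blocksum L r" using q by (simp add: blocksum_Cons)
    show ?thesis unfolding A[of "\<lambda>s. replicate (blocksum (q#L) s) s"] A[of "\<lambda>s. replicate (blocksum L s) s"]
      e1 eq2 br by (simp add: replicate_add)
  qed
  also have "\<dots> = expand (q#L)" using IH q by (simp add: expand_def)
  finally show ?case .
qed

lemma nat_sum_eq_termwise:
  assumes "distinct D" "sum_list (map a D) = sum_list (map b D)" "\<forall>s\<in>set D. a s \<le> (b s::nat)"
  shows "\<forall>s\<in>set D. a s = b s"
proof -
  have "sum a (set D) = sum b (set D)" using assms(1,2) by (simp add: sum_list_distinct_conv_sum_set)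
  then have "sum (\<lambda>s. b s - a s) (set D) = 0" using assms(3) by (simp add: sum_subtractf_nat)
  then have "\<forall>s\<in>set D. b s - a s = 0" by simp
  then show ?thesis using assms(3) by (metis diff_is_0_eq le_antisym)
qed

end

context WF
begin

lemma lin_factD:
  assumes "lin_fact G S g fs"
  shows "2 \<le> length fs" "set fs \<subseteq> Mon G S" "\<And>i. 0 < i \<Longrightarrow> i + 1 < length fs \<Longrightarrow> fs ! i \<noteq> \<one>"
    "sum_list (map len fs) = n" "wprod G fs = g"
  using assms unfolding lin_fact_def by auto

lemma cell_posD:
  assumes "cell_pos k t"
  shows "length t = k" "sorted t" "hd t = 0" "last t = 1"
  using assms unfolding cell_pos_def by auto

lemma cell_pos_range:
  assumes "cell_pos k t" "x \<in> set t"
  shows "0 \<le> x" "x \<le> 1"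
proof -
  note c = cell_posD[OF assms(1)]
  have ne: "t \<noteq> []" using assms(2) by auto
  obtain i where i: "i < length t" "t ! i = x" using assms(2) by (auto simp: in_set_conv_nth)
  have "t ! 0 \<le> t ! i" using sorted_nth_mono[OF c(2), of 0 i] i by simp
  then show "0 \<le> x" using c(3) hd_conv_nth[OF ne] i by simp
  have "t ! i \<le> t ! (length t - 1)" using sorted_nth_mono[OF c(2), of i "length t - 1"] i by simp
  then show "x \<le> 1" using c(4) last_conv_nth[OF ne] i by simp
qed

lemma SL_Mon: "fst ` set L \<subseteq> Mon G S \<Longrightarrow> SL L s \<in> Mon G S"
  unfolding SL_def by (rule wprod_Mon2) auto

lemma SL_len_le: "fst ` set L \<subseteq> Mon G S \<Longrightarrow> len (SL L s) \<le> blocksum L s"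
  unfolding SL_def blocksum_def using wlen_wprod_le[of "map fst (filter (\<lambda>q. snd q = s) L)"]
  by (auto simp: comp_def)

context
  fixes fs t
  assumes lf: "lin_fact G S g fs" and cp: "cell_pos (length fs) t"
begin

lemma lt_len: "length t = length fs" using cell_posD[OF cp] by simp

lemma zip_snd: "map snd (zip fs t) = t" using lt_len by simp
lemma zip_fst: "map fst (zip fs t) = fs" using lt_len by simp

lemma zip_Mon: "fst ` set (zip fs t) \<subseteq> Mon G S"
proof -
  have "fst ` set (zip fs t) = set (map fst (zip fs t))" by simp
  then show ?thesis using zip_fst lin_factD(2)[OF lf] by simp
qed

lemma zip_carrier: "fst ` set (zip fs t) \<subseteq> carrier G"
  using zip_Mon Mon_carrier by blast

lemma zip_sndset: "snd ` set (zip fs t) = set t"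
proof -
  have "snd ` set (zip fs t) = set (map snd (zip fs t))" by simp
  then show ?thesis using zip_snd by simp
qed

abbreviation "Dt \<equiv> sorted_list_of_set (set t)"

lemma Dt_props: "sorted_wrt (<) Dt" "set Dt = set t" "distinct Dt"
  by (simp_all add: sorted_list_of_set.strict_sorted_key_list_of_set)

lemma len_SL_block: "s \<in> set t \<Longrightarrow> len (SL (zip fs t) s) = blocksum (zip fs t) s"
proof -
  assume s: "s \<in> set t"
  let ?L = "zip fs t"
  have prod: "wprod G (map (SL ?L) Dt) = g"
    using SL_group_prod[of ?L Dt] zip_snd cell_posD(2)[OF cp] Dt_props zip_sndset zip_carrier
      zip_fst lin_factD(5)[OF lf] by simp
  have m: "set (map (SL ?L) Dt) \<subseteq> Mon G S" using SL_Mon[OF zip_Mon] by auto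
  have "n \<le> sum_list (map len (map (SL ?L) Dt))" using wlen_wprod_le[OF m] prod by simp
  also have "\<dots> = sum_list (map (len \<circ> SL ?L) Dt)" by simp
  finally have le1: "n \<le> sum_list (map (len \<circ> SL ?L) Dt)" .
  have le2: "sum_list (map (len \<circ> SL ?L) Dt) \<le> sum_list (map (blocksum ?L) Dt)"
    by (rule sum_list_mono) (use SL_len_le[OF zip_Mon] in auto)
  have tot: "sum_list (map (blocksum ?L) Dt) = n"
    using blocksum_total[of Dt ?L] Dt_props zip_sndset lin_factD(4)[OF lf] zip_fst
    by (simp add: map_map[symmetric] del: map_map)
  have "\<forall>s\<in>set Dt. (len \<circ> SL ?L) s = blocksum ?L s"
  proof (rule nat_sum_eq_termwise)
    show "distinct Dt" using Dt_props by simp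
    show "sum_list (map (len \<circ> SL ?L) Dt) = sum_list (map (blocksum ?L) Dt)" using le1 le2 tot by linarith
    show "\<forall>s\<in>set Dt. (len \<circ> SL ?L) s \<le> blocksum ?L s" using SL_len_le[OF zip_Mon] by simp
  qed
  then show ?thesis using s Dt_props by simp
qed

lemma SL_nontriv:
  assumes s: "s \<in> set t" "0 < s" "s < 1"
  shows "SL (zip fs t) s \<noteq> \<one>"
proof -
  obtain i where i: "i < length t" "t ! i = s" using s(1) by (auto simp: in_set_conv_nth)
  have ne: "t \<noteq> []" using s by auto
  have t0: "t ! 0 = 0" using cell_posD(3)[OF cp] hd_conv_nth[OF ne] by simp
  have t1: "t ! (length t - 1) = 1" using cell_posD(4)[OF cp] last_conv_nth[OF ne] by simp
  have "i \<noteq> 0"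
  proof
    assume "i = 0" then show False using t0 i s by simp
  qed
  moreover have "i \<noteq> length t - 1"
  proof
    assume "i = length t - 1" then show False using t1 i s by simp
  qed
  ultimately have fi: "fs ! i \<noteq> \<one>" using lin_factD(3)[OF lf, of i] i lt_len by simp
  have fm: "fs ! i \<in> Mon G S" using lin_factD(2)[OF lf] i lt_len by auto
  have l1: "1 \<le> len (fs ! i)" using wlen_zero[OF fm] fi by (cases "len (fs ! i)") auto
  have "(fs ! i, s) \<in> set (filter (\<lambda>q. snd q = s) (zip fs t))"
    using i lt_len by (auto simp: in_set_conv_nth intro!: exI[of _ i])
  then have "len (fs ! i) \<in> set (map (len \<circ> fst) (filter (\<lambda>q. snd q = s) (zip fs t)))" by force
  then have "len (fs ! i) \<le> blocksum (zip fs t) s" unfolding blocksum_def by (rule member_le_sum_list) simp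
  then have "1 \<le> len (SL (zip fs t) s)" using len_SL_block[OF s(1)] l1 by simp
  then show ?thesis by auto
qed

lemma wpts_realize: "wpts G (SL (zip fs t)) = Dt"
proof -
  have ne: "t \<noteq> []" using lt_len lin_factD(1)[OF lf] by auto
  have "{0, 1} \<union> {s. 0 < s \<and> s < 1 \<and> SL (zip fs t) s \<noteq> \<one>} = set t"
  proof (intro equalityI subsetI)
    fix x assume "x \<in> {0, 1} \<union> {s. 0 < s \<and> s < 1 \<and> SL (zip fs t) s \<noteq> \<one>}"
    then consider "x = 0" | "x = 1" | "SL (zip fs t) x \<noteq> \<one>" by blast
    then show "x \<in> set t"
    proof cases
      case 1 then show ?thesis using cell_posD(3)[OF cp] ne hd_in_set by metis
    next
      case 2 then show ?thesis using cell_posD(4)[OF cp] ne last_in_set by metis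
    next
      case 3 then show ?thesis using SL_notin zip_sndset by blast
    qed
  next
    fix x assume x: "x \<in> set t"
    have "0 \<le> x" "x \<le> 1" using cell_pos_range[OF cp x] by auto
    then show "x \<in> {0, 1} \<union> {s. 0 < s \<and> s < 1 \<and> SL (zip fs t) s \<noteq> \<one>}"
      using SL_nontriv[OF x] by auto
  qed
  then show ?thesis unfolding wpts_def by simp
qed

lemma realize_eq: "realize G fs t = SL (zip fs t)"
  using realize_SL lt_len by simp

lemma wcoord_realize: "wcoord G S (realize G fs t) = expand (zip fs t)"
proof -
  have "wcoord G S (realize G fs t) = concat (map (\<lambda>s. replicate (len (SL (zip fs t) s)) s) Dt)"
    unfolding wcoord_def realize_eq wpts_realize ..
  also have "\<dots> = concat (map (\<lambda>s. replicate (blocksum (zip fs t) s) s) Dt)"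
  proof -
    have "map (\<lambda>s. replicate (len (SL (zip fs t) s)) s) Dt = map (\<lambda>s. replicate (blocksum (zip fs t) s) s) Dt"
    proof (rule map_cong[OF refl])
      fix s assume "s \<in> set Dt"
      then have "s \<in> set t" using Dt_props by simp
      then show "replicate (len (SL (zip fs t) s)) s = replicate (blocksum (zip fs t) s) s"
        using len_SL_block by simp
    qed
    then show ?thesis by (rule arg_cong)
  qed
  also have "\<dots> = expand (zip fs t)"
  proof (rule expand_group)
    show "sorted (map snd (zip fs t))" using zip_snd cell_posD(2)[OF cp] by simp
    show "sorted_wrt (<) Dt" using Dt_props by simp
    show "snd ` set (zip fs t) \<subseteq> set Dt" using zip_sndset Dt_props by simp
  qed
  finally show ?thesis .
qed

end

end

context WF
begin

lemma expand_length: "length (expand L) = sum_list (map (len \<circ> fst) L)"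
  by (induction L) (auto simp: expand_def)

lemma expand_set: "set (expand L) \<subseteq> snd ` set L"
  by (induction L) (auto simp: expand_def)

lemma expand_sorted: "sorted (map snd L) \<Longrightarrow> sorted (expand L)"
proof (induction L)
  case Nil then show ?case by (simp add: expand_def)
next
  case (Cons q L)
  have "sorted (expand L)" using Cons by simp
  moreover have "\<forall>y\<in>set (expand L). snd q \<le> y" using expand_set Cons.prems by fastforce
  ultimately show ?case by (simp add: expand_def sorted_append)
qed

lemma expand_Cons: "expand (q # L) = replicate (len (fst q)) (snd q) @ expand L"
  by (simp add: expand_def)

lemma zip_concat_expand:
  assumes "length ws = length fs" "length fs = length t" "\<forall>i<length fs. length (ws ! i) = len (fs ! i)"
  shows "zip (concat ws) (expand (zip fs t)) = concat (map2 (\<lambda>w q. map (\<lambda>l. (l, snd q)) w) ws (zip fs t))"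
  using assms
proof (induction ws fs t rule: list_induct3)
  case Nil then show ?case by (simp add: expand_def)
next
  case (Cons w ws f fs r t)
  have lw: "length w = len f" using Cons.prems[rule_format, of 0] by simp
  have IH: "zip (concat ws) (expand (zip fs t)) = concat (map2 (\<lambda>w q. map (\<lambda>l. (l, snd q)) w) ws (zip fs t))"
    using Cons.IH Cons.prems by force
  have "zip (concat (w # ws)) (expand (zip (f # fs) (r # t)))
      = zip (w @ concat ws) (replicate (len f) r @ expand (zip fs t))" by (simp add: expand_Cons)
  also have "\<dots> = zip w (replicate (len f) r) @ zip (concat ws) (expand (zip fs t))"
    using lw by (simp add: zip_append)
  also have "zip w (replicate (len f) r) = map (\<lambda>l. (l, r)) w"
    using lw[symmetric] by (induction w arbitrary: f) (auto simp: zip_replicate2)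
  finally show ?case using IH by simp
qed

context
  fixes fs ws
  assumes lf: "lin_fact G S g fs"
    and lws: "length ws = length fs"
    and wsp: "\<forall>i<length fs. set (ws!i) \<subseteq> S \<and> length (ws!i) = len (fs!i) \<and> wprod G (ws!i) = fs!i"
begin

definition "Wd = concat ws"
definition "cC = map (\<lambda>j. wprod G (take j Wd)) [0..<n+1]"

lemma Wd_S: "set Wd \<subseteq> S"
proof
  fix y assume "y \<in> set Wd"
  then obtain w where "w \<in> set ws" "y \<in> set w" unfolding Wd_def by auto
  then obtain i where "i < length ws" "w = ws ! i" by (auto simp: in_set_conv_nth)
  then show "y \<in> S" using wsp lws \<open>y \<in> set w\<close> by auto
qed

lemma Wd_carrier: "set Wd \<subseteq> carrier G" using Wd_S S_sub by blast

lemma Wd_length: "length Wd = n"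
proof -
  have "length Wd = sum_list (map length ws)" unfolding Wd_def by (simp add: length_concat)
  also have "map length ws = map len fs" using wsp lws by (intro nth_equalityI) auto
  finally show ?thesis using lin_factD(4)[OF lf] by simp
qed

lemma Wd_prod: "wprod G Wd = g"
proof -
  have "wprod G Wd = wprod G (map (wprod G) ws)" unfolding Wd_def using wprod_concat Wd_carrier Wd_def by metis
  also have "map (wprod G) ws = fs" using wsp lws by (intro nth_equalityI) auto
  finally show ?thesis using lin_factD(5)[OF lf] by simp
qed

lemma Wd_red: "len (wprod G Wd) = length Wd" using Wd_prod Wd_length by simp

lemma cC_length: "length cC = n + 1" by (simp add: cC_def)

lemma cC_nth: "j \<le> n \<Longrightarrow> cC ! j = wprod G (take j Wd)"
  by (simp add: cC_def del: upt_Suc)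

lemma cC_len: "j \<le> n \<Longrightarrow> len (cC ! j) = j"
  using reduced_take(1)[OF Wd_S Wd_red] Wd_length cC_nth by simp

lemma cC_Mon: "j \<le> n \<Longrightarrow> cC ! j \<in> Mon G S"
proof -
  assume "j \<le> n"
  have "set (take j Wd) \<subseteq> S" using Wd_S set_take_subset[of j Wd] by blast
  then show ?thesis using cC_nth \<open>j \<le> n\<close> wprod_Mon by simp
qed

lemma cC_le:
  assumes "j \<le> j'" "j' \<le> n"
  shows "ple (cC ! j) (cC ! j')"
proof -
  define r where "r = wprod G (take (j' - j) (drop j Wd))"
  have rs: "set (take (j' - j) (drop j Wd)) \<subseteq> S" using Wd_S set_take_subset set_drop_subset by (metis subset_trans)
  have rc: "set (take (j' - j) (drop j Wd)) \<subseteq> carrier G" using rs S_sub by blast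
  have tc: "set (take j Wd) \<subseteq> carrier G" using Wd_carrier set_take_subset by (metis subset_trans)
  have "take j' Wd = take j Wd @ take (j' - j) (drop j Wd)" using assms
    by (metis add_diff_inverse_nat not_le take_add)
  then have e: "cC ! j' = cC ! j \<otimes> r" using cC_nth assms wprod_append[OF tc rc] r_def by simp
  have rm: "r \<in> Mon G S" using rs r_def wprod_Mon by simp
  have lr: "len r \<le> j' - j" using wlen_le[OF rs] r_def by simp
  have l1: "len (cC ! j') = j'" "len (cC ! j) = j" using cC_len assms by auto
  have "len (cC ! j \<otimes> r) \<le> len (cC ! j) + len r" using wlen_mult[OF cC_Mon rm, of j] assms by simp
  then have "j' \<le> len (cC ! j) + len r" using e l1 by simp
  then have "len (cC ! j \<otimes> r) = len (cC ! j) + len r" using e l1 lr assms by (simp only:)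
  then show ?thesis using pleq_mult[OF cC_Mon rm, of j] e assms by simp
qed

lemma cC_last: "cC ! n = g" using cC_nth Wd_length Wd_prod by simp
lemma cC_first: "cC ! 0 = \<one>" using cC_nth by simp

lemma cC_chain: "chain cC"
  unfolding is_chain_def
proof
  show "set cC \<subseteq> interval G S g"
  proof
    fix z assume "z \<in> set cC"
    then obtain j where "j < length cC" "z = cC ! j" by (auto simp: in_set_conv_nth)
    then have "j \<le> n" "z = cC ! j" using cC_length by auto
    then show "z \<in> interval G S g" using cC_le[of j n] cC_last interval_iff by simp
  qed
  show "sorted_wrt slt cC"
    unfolding sorted_wrt_iff_nth_less
  proof (intro allI impI)
    fix i j assume "i < j" "j < length cC"
    then show "slt (cC ! i) (cC ! j)" using cC_le[of i j] cC_len[of i] cC_len[of j] cC_length by auto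
  qed
qed

lemma cC_max: "is_maxchain G S g cC"
  using chain_full_max[OF cC_chain cC_length] .

lemma cC_label: "1 \<le> i \<Longrightarrow> i \<le> n \<Longrightarrow> inv (cC ! (i - 1)) \<otimes> cC ! i = Wd ! (i - 1)"
proof -
  assume i: "1 \<le> i" "i \<le> n"
  obtain k where k: "i = Suc k" using i(1) by (cases i) auto
  have kl: "k < length Wd" using k i Wd_length by simp
  have "take i Wd = take k Wd @ [Wd ! k]" using k take_Suc_conv_app_nth[OF kl] by simp
  moreover have "set (take k Wd) \<subseteq> carrier G" using Wd_carrier set_take_subset[of k Wd] by blast
  moreover have wi: "Wd ! k \<in> carrier G" using Wd_carrier nth_mem[OF kl] by blast
  ultimately have "cC ! i = cC ! k \<otimes> Wd ! k" using cC_nth[of i] cC_nth[of k] i k by (simp add: wprod_append)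
  moreover have "cC ! k \<in> carrier G" using cC_Mon[of k] i k by simp
  ultimately show ?thesis using wi k by (simp add: m_assoc[symmetric])
qed

end

end

context WF
begin

context
  fixes fs ws
  assumes lf: "lin_fact G S g fs"
    and lws: "length ws = length fs"
    and wsp: "\<forall>i<length fs. set (ws!i) \<subseteq> S \<and> length (ws!i) = len (fs!i) \<and> wprod G (ws!i) = fs!i"
begin

abbreviation "cc \<equiv> cC ws"
lemmas cc_chain = cC_chain[OF lf lws wsp]
lemmas cc_length = cC_length[OF lf lws wsp]
lemmas cc_len = cC_len[OF lf lws wsp]
lemmas cc_label = cC_label[OF lf lws wsp]
lemmas cc_first = cC_first[OF lf lws wsp]
lemmas cc_last = cC_last[OF lf lws wsp]
lemmas cc_max = cC_max[OF lf lws wsp]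
lemmas cc_Mon = cC_Mon[OF lf lws wsp]

definition "Ept tp = expand (zip fs tp)"
definition "pif tp i = (if i = 0 then 0 else if i \<le> n then Ept tp ! (i - 1) else (1::real))"
definition "xw tp z = (if z \<in> set cc then pif tp (len z + 1) - pif tp (len z) else 0)"

lemma Ept_length: "cell_pos (length fs) tp \<Longrightarrow> length (Ept tp) = n"
proof -
  assume cp: "cell_pos (length fs) tp"
  have "length (Ept tp) = sum_list (map (len \<circ> fst) (zip fs tp))" unfolding Ept_def by (rule expand_length)
  also have "\<dots> = sum_list (map len (map fst (zip fs tp)))" by simp
  also have "map fst (zip fs tp) = fs" using zip_fst[OF lf cp] .
  finally show ?thesis using lin_factD(4)[OF lf] by simp
qed

lemma Ept_sorted: "cell_pos (length fs) tp \<Longrightarrow> sorted (Ept tp)"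
proof -
  assume cp: "cell_pos (length fs) tp"
  have "sorted (map snd (zip fs tp))" using zip_snd[OF lf cp] cell_posD(2)[OF cp] by simp
  then show ?thesis unfolding Ept_def by (rule expand_sorted)
qed

lemma Ept_range: "cell_pos (length fs) tp \<Longrightarrow> x \<in> set (Ept tp) \<Longrightarrow> 0 \<le> x \<and> x \<le> 1"
proof -
  assume cp: "cell_pos (length fs) tp" and x: "x \<in> set (Ept tp)"
  then have "x \<in> snd ` set (zip fs tp)" using expand_set unfolding Ept_def by blast
  then have "x \<in> set tp" using zip_sndset[OF lf cp] by simp
  then show ?thesis using cell_pos_range[OF cp] by auto
qed

lemma pif_mono:
  assumes cp: "cell_pos (length fs) tp" and ij: "i \<le> j"
  shows "pif tp i \<le> pif tp j"
proof -
  note l = Ept_length[OF cp] and so = Ept_sorted[OF cp] and r = Ept_range[OF cp]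
  have rng: "k < n \<Longrightarrow> 0 \<le> Ept tp ! k \<and> Ept tp ! k \<le> 1" for k using r l nth_mem by metis
  consider "i = 0" | "0 < i \<and> i \<le> n \<and> j \<le> n" | "0 < i \<and> i \<le> n \<and> n < j" | "n < i" using ij by linarith
  then show ?thesis
  proof cases
    case 1 then show ?thesis unfolding pif_def using rng[of "j - 1"] by auto
  next
    case 2 then show ?thesis unfolding pif_def using sorted_nth_mono[OF so, of "i - 1" "j - 1"] l ij by auto
  next
    case 3 then show ?thesis unfolding pif_def using rng[of "i - 1"] by auto
  next
    case 4 then show ?thesis unfolding pif_def using ij by auto
  qed
qed

lemma pif_0[simp]: "pif tp 0 = 0" by (simp add: pif_def)
lemma pif_last: "pif tp (n + 1) = 1" by (simp add: pif_def)

lemma xw_nth: "j \<le> n \<Longrightarrow> xw tp (cc ! j) = pif tp (j + 1) - pif tp j"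
proof -
  assume j: "j \<le> n"
  have "cc ! j \<in> set cc" using j cc_length by simp
  then show ?thesis unfolding xw_def using cc_len[OF j] by simp
qed

lemma xw_supp: "supp (xw tp) \<subseteq> set cc"
  unfolding supp_def xw_def by auto

lemma cc_distinct: "distinct cc" using chain_distinct[OF cc_chain] .

lemma sum_set_cc: "sum h (set cc) = (\<Sum>j<n+1. h (cc ! j))"
proof -
  have "sum h (set cc) = sum_list (map h cc)" using sum_list_distinct_conv_sum_set[OF cc_distinct, of h] by simp
  also have "\<dots> = (\<Sum>j<length cc. h (cc ! j))" by (simp add: sum_list_sum_nth atLeast0LessThan)
  finally show ?thesis using cc_length by simp
qed

lemma xw_Opts:
  assumes cp: "cell_pos (length fs) tp"
  shows "xw tp \<in> Op"
  unfolding Opts_def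
proof (intro CollectI conjI allI ballI)
  fix z show "0 \<le> xw tp z" unfolding xw_def using pif_mono[OF cp] by auto
next
  show "finite (supp (xw tp))" using xw_supp finite_subset by blast
next
  show "supp (xw tp) \<subseteq> interval G S g" using xw_supp cc_chain unfolding is_chain_def by blast
next
  fix x y assume "x \<in> supp (xw tp)" "y \<in> supp (xw tp)"
  then show "ple x y \<or> ple y x" using chain_comparable[OF cc_chain] xw_supp by blast
next
  have "sum (xw tp) (supp (xw tp)) = sum (xw tp) (set cc)"
    by (rule sum.mono_neutral_left) (use xw_supp in \<open>auto simp: supp_def\<close>)
  also have "\<dots> = (\<Sum>j<n+1. pif tp (Suc j) - pif tp j)" unfolding sum_set_cc using xw_nth by simp
  also have "\<dots> = 1" using sum_lessThan_telescope[of "pif tp" "n+1"] pif_last by simp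
  finally show "sum (xw tp) (supp (xw tp)) = 1" .
qed

lemma sum_take_xw: "i \<le> n + 1 \<Longrightarrow> sum_list (map (xw tp) (take i cc)) = pif tp i"
proof -
  assume i: "i \<le> n + 1"
  have "sum_list (map (xw tp) (take i cc)) = (\<Sum>j<i. xw tp (cc ! j))"
    using i cc_length by (simp add: sum_list_sum_nth atLeast0LessThan min_def)
  also have "\<dots> = (\<Sum>j<i. pif tp (Suc j) - pif tp j)" using xw_nth i by simp
  also have "\<dots> = pif tp i" using sum_lessThan_telescope[of "pif tp" i] by simp
  finally show ?thesis .
qed

end

end

context WF
begin

context
  fixes fs ws
  assumes lf: "lin_fact G S g fs"
    and lws: "length ws = length fs"
    and wsp: "\<forall>i<length fs. set (ws!i) \<subseteq> S \<and> length (ws!i) = len (fs!i) \<and> wprod G (ws!i) = fs!i"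
begin

lemmas kcc_chain = cC_chain[OF lf lws wsp]
lemmas kcc_length = cC_length[OF lf lws wsp]
lemmas kcc_len = cC_len[OF lf lws wsp]
lemmas kcc_label = cC_label[OF lf lws wsp]
lemmas kcc_first = cC_first[OF lf lws wsp]
lemmas kcc_last = cC_last[OF lf lws wsp]
lemmas kcc_Mon = cC_Mon[OF lf lws wsp]
lemmas xwOp = xw_Opts[OF lf lws wsp]
lemmas xwsupp = xw_supp[where ws=ws]
lemmas sumtake = sum_take_xw[OF lf lws wsp]
lemmas Eptlen = Ept_length[OF lf lws wsp]
lemmas xwnth = xw_nth[OF lf lws wsp]
lemmas pifl = pif_last[OF lf lws wsp]
lemmas pifdef = pif_def[OF lf lws wsp]
lemmas Eptdef = Ept_def[OF lf lws wsp]
lemmas Wddef = Wd_def[OF lf lws wsp]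

lemma plist_cc:
  assumes cp: "cell_pos (length fs) tp"
  shows "plist (xw fs ws tp) \<one> 0 (cC ws) = (\<one>, 0) # zip (Wd ws) (Ept fs tp) @ [(\<one>, 1)]"
proof (rule nth_equalityI)
  have lW: "length (Wd ws) = n" using Wd_length[OF lf lws wsp] .
  show "length (plist (xw fs ws tp) \<one> 0 (cC ws)) = length ((\<one>, 0) # zip (Wd ws) (Ept fs tp) @ [(\<one>, 1)])"
    using kcc_length lW Eptlen[OF cp] by simp
  fix i assume "i < length (plist (xw fs ws tp) \<one> 0 (cC ws))"
  then have i: "i \<le> n + 1" using kcc_length by simp
  have pn: "plist (xw fs ws tp) \<one> 0 (cC ws) ! i = (inv ((\<one> # cC ws)!i) \<otimes> ((cC ws @ [g])!i), pif fs tp i)"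
    using plist_nth[of i "cC ws"] i kcc_length sumtake[of i tp] by simp
  consider "i = 0" | "1 \<le> i \<and> i \<le> n" | "i = n + 1" using i by linarith
  then show "plist (xw fs ws tp) \<one> 0 (cC ws) ! i = ((\<one>, 0) # zip (Wd ws) (Ept fs tp) @ [(\<one>, 1)]) ! i"
  proof cases
    case 1 then show ?thesis using pn kcc_first kcc_length by (simp add: nth_append pifdef)
  next
    case 2
    have a: "(\<one> # cC ws)!i = cC ws ! (i - 1)" using 2 by (cases i) auto
    have b: "(cC ws @ [g])!i = cC ws ! i" using 2 kcc_length by (simp add: nth_append)
    have c: "((\<one>, 0) # zip (Wd ws) (Ept fs tp) @ [(\<one>, 1)]) ! i = (Wd ws ! (i - 1), Ept fs tp ! (i - 1))"
      using 2 lW Eptlen[OF cp] by (cases i) (auto simp: nth_append)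
    show ?thesis using pn a b c kcc_label[of i] 2 by (simp add: pifdef)
  next
    case 3
    have a: "(\<one> # cC ws)!i = g" using 3 kcc_last kcc_length by simp
    have b: "(cC ws @ [g])!i = g" using 3 kcc_length by (simp add: nth_append)
    have c: "((\<one>, 0) # zip (Wd ws) (Ept fs tp) @ [(\<one>, 1)]) ! i = (\<one>, 1)"
      using 3 lW Eptlen[OF cp] by (simp add: nth_append)
    show ?thesis using pn a b c 3 pifl by simp
  qed
qed

lemma fmap_xw:
  assumes cp: "cell_pos (length fs) tp"
  shows "fmap (xw fs ws tp) = realize G fs tp"
proof -
  have lt: "length tp = length fs" using cell_posD(1)[OF cp] .
  have Wc: "set (Wd ws) \<subseteq> carrier G" using Wd_carrier[OF lf lws wsp] .
  have zc: "fst ` set (zip (Wd ws) (Ept fs tp)) \<subseteq> carrier G"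
    using Wc by (auto dest: set_zip_leftD)
  have "fmap (xw fs ws tp) = SL (plist (xw fs ws tp) \<one> 0 (cC ws))"
    using fmap_chain[OF xwOp[OF cp] kcc_chain xwsupp[OF lf lws wsp]] .
  also have "\<dots> = SL ((\<one>, 0) # zip (Wd ws) (Ept fs tp) @ [(\<one>, 1)])" using plist_cc[OF cp] by simp
  also have "\<dots> = SL (zip (Wd ws) (Ept fs tp))"
  proof
    fix s
    have A: "SL (zip (Wd ws) (Ept fs tp) @ [(\<one>, 1)]) s = SL (zip (Wd ws) (Ept fs tp)) s" for s
    proof -
      have "SL (zip (Wd ws) (Ept fs tp) @ [(\<one>, 1)]) s = SL (zip (Wd ws) (Ept fs tp)) s \<otimes> SL [(\<one>, 1)] s"
        by (rule SL_append) (use zc in auto)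
      also have "SL [(\<one>, 1)] s = \<one>" by (simp add: SL_Cons)
      finally show ?thesis using SL_closed[OF zc] by simp
    qed
    show "SL ((\<one>, 0) # zip (Wd ws) (Ept fs tp) @ [(\<one>, 1)]) s = SL (zip (Wd ws) (Ept fs tp)) s"
      using SL_closed[OF zc] A by (simp add: SL_Cons)
  qed
  also have "zip (Wd ws) (Ept fs tp) = concat (map2 (\<lambda>w q. map (\<lambda>l. (l, snd q)) w) ws (zip fs tp))"
  proof -
    have l1: "length fs = length tp" using lt by simp
    have l2: "\<forall>i<length fs. length (ws ! i) = len (fs ! i)" using wsp by blast
    show ?thesis unfolding Wddef Eptdef by (rule zip_concat_expand[OF lws l1 l2])
  qed
  also have "SL \<dots> = SL (zip fs tp)"
  proof (rule SL_split)
    show "length ws = length (zip fs tp)" using lws lt by simp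
    show "\<forall>i<length (zip fs tp). wprod G (ws ! i) = fst (zip fs tp ! i) \<and> set (ws ! i) \<subseteq> carrier G"
    proof (intro allI impI)
      fix i assume "i < length (zip fs tp)"
      then have i: "i < length fs" using lt by simp
      have "set (ws ! i) \<subseteq> S" "wprod G (ws ! i) = fs ! i" using wsp i by auto
      then show "wprod G (ws ! i) = fst (zip fs tp ! i) \<and> set (ws ! i) \<subseteq> carrier G"
        using i lt S_sub by auto
    qed
  qed
  also have "\<dots> = realize G fs tp" using realize_eq[OF lf cp] by simp
  finally show ?thesis .
qed

lemma ocoord_xw:
  assumes cp: "cell_pos (length fs) tp" and j: "j \<le> n + 1"
  shows "ocoord (cC ws) (xw fs ws tp) j = 1 - pif fs tp (n + 1 - j)"
proof -
  have "ocoord (cC ws) (xw fs ws tp) j = (\<Sum>i\<in>{n + 1 - j..<n + 1}. xw fs ws tp (cC ws ! i))"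
    unfolding ocoord_def using kcc_length by simp
  also have "\<dots> = (\<Sum>i\<in>{n + 1 - j..<n + 1}. pif fs tp (Suc i) - pif fs tp i)"
    by (rule sum.cong) (auto simp: xwnth)
  also have "\<dots> = pif fs tp (n + 1) - pif fs tp (n + 1 - j)" by (rule sum_Suc_diff') simp
  finally show ?thesis using pifl by simp
qed

lemma odist_wdist:
  assumes cp: "cell_pos (length fs) tp" and cp': "cell_pos (length fs) tp'"
  shows "odist (cC ws) (xw fs ws tp) (xw fs ws tp') = wdist G S (realize G fs tp) (realize G fs tp')"
proof -
  let ?h = "\<lambda>i. (pif fs tp i - pif fs tp' i)^2"
  have "(\<Sum>j\<in>{1..length (cC ws) - 1}. (ocoord (cC ws) (xw fs ws tp) j - ocoord (cC ws) (xw fs ws tp') j)^2)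
      = (\<Sum>j\<in>{1..n}. ?h (n + 1 - j))"
    using kcc_length by (intro sum.cong) (auto simp: ocoord_xw[OF cp] ocoord_xw[OF cp'] power2_commute)
  also have "\<dots> = (\<Sum>j\<in>{1..n}. ?h j)"
    using sum.atLeastAtMost_rev[of "\<lambda>j. ?h (n + 1 - j)" 1 n] by simp
  also have "\<dots> = (\<Sum>k<n. ?h (Suc k))" using sum.atLeast1_atMost_eq[of ?h n] by simp
  also have "\<dots> = (\<Sum>k<n. (Ept fs tp ! k - Ept fs tp' ! k)^2)" by (rule sum.cong) (auto simp: pifdef)
  also have "\<dots> = sum_list (map (\<lambda>(a, b). (a - b)^2) (zip (Ept fs tp) (Ept fs tp')))"
    using Eptlen[OF cp] Eptlen[OF cp'] by (simp add: sum_list_sum_nth atLeast0LessThan)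
  finally have e: "(\<Sum>j\<in>{1..length (cC ws) - 1}. (ocoord (cC ws) (xw fs ws tp) j - ocoord (cC ws) (xw fs ws tp') j)^2)
     = sum_list (map (\<lambda>(a, b). (a - b)^2) (zip (Ept fs tp) (Ept fs tp')))" .
  show ?thesis unfolding odist_def wdist_def wcoord_realize[OF lf cp] wcoord_realize[OF lf cp'] e Eptdef ..
qed

end

end

context WF
begin

lemma words_exist:
  assumes lf: "lin_fact G S g fs"
  shows "\<exists>ws. length ws = length fs \<and>
     (\<forall>i<length fs. set (ws!i) \<subseteq> S \<and> length (ws!i) = len (fs!i) \<and> wprod G (ws!i) = fs!i)"
proof -
  define ws where "ws = map (\<lambda>f. SOME w. set w \<subseteq> S \<and> length w = len f \<and> wprod G w = f) fs"
  have "\<forall>i<length fs. set (ws!i) \<subseteq> S \<and> length (ws!i) = len (fs!i) \<and> wprod G (ws!i) = fs!i"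
  proof (intro allI impI)
    fix i assume i: "i < length fs"
    have "fs ! i \<in> Mon G S" using lin_factD(2)[OF lf] i by auto
    then have "\<exists>w. set w \<subseteq> S \<and> length w = len (fs ! i) \<and> wprod G w = fs ! i" using wlen_ex by blast
    from someI_ex[OF this] show "set (ws!i) \<subseteq> S \<and> length (ws!i) = len (fs!i) \<and> wprod G (ws!i) = fs!i"
      unfolding ws_def using i by simp
  qed
  then show ?thesis using ws_def by (intro exI[of _ ws]) simp
qed

lemma wstep_lift:
  assumes "wstep G S g u v r"
  shows "\<exists>x y. x \<in> Op \<and> y \<in> Op \<and> fmap x = u \<and> fmap y = v \<and> ostep G S g x y r"
proof -
  obtain fs tp tp' where w: "lin_fact G S g fs" "cell_pos (length fs) tp" "cell_pos (length fs) tp'"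
    "u = realize G fs tp" "v = realize G fs tp'" "r = wdist G S u v"
    using assms unfolding wstep_def by blast
  obtain ws where ws: "length ws = length fs"
     "\<forall>i<length fs. set (ws!i) \<subseteq> S \<and> length (ws!i) = len (fs!i) \<and> wprod G (ws!i) = fs!i"
    using words_exist[OF w(1)] by blast
  define x where "x = xw fs ws tp"
  define y where "y = xw fs ws tp'"
  have xo: "x \<in> Op" "y \<in> Op" using xw_Opts[OF w(1) ws w(2)] xw_Opts[OF w(1) ws w(3)] x_def y_def by auto
  have fx: "fmap x = u" "fmap y = v" using fmap_xw[OF w(1) ws w(2)] fmap_xw[OF w(1) ws w(3)] w x_def y_def by auto
  have "ostep G S g x y r" unfolding ostep_def
  proof (intro exI conjI)
    show "is_maxchain G S g (cC ws)" using cC_max[OF w(1) ws] .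
    show "supp x \<subseteq> set (cC ws)" using xw_supp[OF w(1) ws] x_def by simp
    show "supp y \<subseteq> set (cC ws)" using xw_supp[OF w(1) ws] y_def by simp
    show "r = odist (cC ws) x y" using odist_wdist[OF w(1) ws w(2) w(3)] w x_def y_def by simp
  qed
  then show ?thesis using xo fx by blast
qed

lemma sorted_list_hd_last:
  assumes "finite A" "(0::real) \<in> A" "1 \<in> A" "\<forall>x\<in>A. 0 \<le> x \<and> x \<le> 1"
  shows "hd (sorted_list_of_set A) = 0" "last (sorted_list_of_set A) = 1"
proof -
  let ?l = "sorted_list_of_set A"
  have sl: "sorted ?l" "set ?l = A" using assms(1) by auto
  then have ne: "?l \<noteq> []" using assms(2) by auto
  have "hd ?l \<in> A" using hd_in_set[OF ne] sl by simp
  moreover have "hd ?l \<le> 0"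
  proof -
    obtain i where "i < length ?l" "?l ! i = 0" using assms(2) sl by (metis in_set_conv_nth)
    then show ?thesis using sorted_nth_mono[OF sl(1), of 0 i] hd_conv_nth[OF ne] by simp
  qed
  ultimately show "hd ?l = 0" using assms(4) by force
  have "last ?l \<in> A" using last_in_set[OF ne] sl by simp
  moreover have "1 \<le> last ?l"
  proof -
    obtain i where "i < length ?l" "?l ! i = 1" using assms(3) sl by (metis in_set_conv_nth)
    then show ?thesis using sorted_nth_mono[OF sl(1), of i "length ?l - 1"] last_conv_nth[OF ne] by simp
  qed
  ultimately show "last ?l = 1" using assms(4) by force
qed

lemma fmap_surj:
  assumes u: "u \<in> WFactI G S g"
  shows "\<exists>p\<in>Op. fmap p = u"
proof -
  have u1: "\<forall>t. t \<notin> {0..1} \<longrightarrow> u t = \<one>" "finite {t. u t \<noteq> \<one>}"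
    "lin_fact G S g (map u (wpts G u))" using u unfolding WFactI_def by auto
  define A where "A = {0, 1} \<union> {t. 0 < t \<and> t < 1 \<and> u t \<noteq> \<one>}"
  have fA: "finite A" unfolding A_def using u1(2) by (auto intro: finite_subset)
  have wA: "wpts G u = sorted_list_of_set A" unfolding wpts_def A_def ..
  have Ar: "\<forall>x\<in>A. 0 \<le> x \<and> x \<le> 1" unfolding A_def by auto
  define fs where "fs = map u (wpts G u)"
  define tp where "tp = wpts G u"
  have lf: "lin_fact G S g fs" using u1(3) fs_def by simp
  have cp: "cell_pos (length fs) tp"
    unfolding cell_pos_def fs_def tp_def wA using sorted_list_hd_last[OF fA _ _ Ar] A_def by auto
  have re: "realize G fs tp = u"
  proof
    fix s
    have d: "distinct tp" unfolding tp_def wA by simp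
    have fc: "fst ` set (zip fs tp) \<subseteq> carrier G" using zip_carrier[OF lf cp] .
    have "realize G fs tp s = SL (zip fs tp) s" using realize_eq[OF lf cp] by simp
    also have "\<dots> = u s"
    proof (cases "s \<in> set tp")
      case True
      then obtain i where i: "i < length tp" "tp ! i = s" by (auto simp: in_set_conv_nth)
      then have "zip fs tp ! i = (u s, s)" unfolding fs_def tp_def by simp
      moreover have "i < length (zip fs tp)" using i unfolding fs_def tp_def by simp
      ultimately have "(u s, s) \<in> set (zip fs tp)" by (metis nth_mem)
      moreover have "distinct (map snd (zip fs tp))" using zip_snd[OF lf cp] d by simp
      ultimately show ?thesis using SL_distinct fc by blast
    next
      case False
      then have "s \<notin> A" unfolding tp_def wA using fA by simp
      then have "u s = \<one>" using u1(1) unfolding A_def by auto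
      moreover have "s \<notin> snd ` set (zip fs tp)" using False zip_sndset[OF lf cp] by simp
      ultimately show ?thesis using SL_notin by simp
    qed
    finally show "realize G fs tp s = u s" .
  qed
  obtain ws where ws: "length ws = length fs"
     "\<forall>i<length fs. set (ws!i) \<subseteq> S \<and> length (ws!i) = len (fs!i) \<and> wprod G (ws!i) = fs!i"
    using words_exist[OF lf] by blast
  show ?thesis using xw_Opts[OF lf ws cp] fmap_xw[OF lf ws cp] re by blast
qed

end

context WF
begin

lemma expand_unit: "length lb = length P \<Longrightarrow> \<forall>l\<in>set lb. len l = 1 \<Longrightarrow> expand (zip lb P) = P"
proof (induction lb P rule: list_induct2)
  case Nil then show ?case by (simp add: expand_def)
next
  case (Cons l lb p P) then show ?case by (simp add: expand_Cons)
qed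

context
  fixes c assumes mc: "is_maxchain G S g c"
begin

lemma mc_chain: "chain c" using mc unfolding is_maxchain_def by blast
lemma mc_length: "length c = n + 1" using maxchain_length[OF mc] .
lemma mc_len: "i \<le> n \<Longrightarrow> len (c ! i) = i" using chain_full_nth[OF mc_chain mc_length] .
lemma mc_Mon: "i \<le> n \<Longrightarrow> c ! i \<in> Mon G S" using chain_Mon[OF mc_chain] mc_length by simp
lemma mc_first: "c ! 0 = \<one>" using mc_len[of 0] wlen_zero[OF mc_Mon[of 0]] by simp
lemma mc_last: "c ! n = g"
proof -
  have "c ! n \<in> interval G S g" using mc_chain mc_length unfolding is_chain_def by auto
  then have "ple (c ! n) g" using interval_iff by simp
  then show ?thesis using pleq_len_eq mc_len[of n] by simp
qed
lemma mc_step: "1 \<le> i \<Longrightarrow> i \<le> n \<Longrightarrow> ple (c ! (i - 1)) (c ! i)"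
  using mc_chain mc_length sorted_wrt_nth_less[of slt c "i - 1" i] unfolding is_chain_def by simp

definition "lb = map (\<lambda>i. inv (c ! (i - 1)) \<otimes> c ! i) [1..<n+1]"
definition "fsc = \<one> # lb @ [\<one>]"
definition "wsc = [] # map (\<lambda>l. [l]) lb @ [[]]"

lemma lb_length: "length lb = n" by (simp add: lb_def del: upt_Suc)
lemma lb_nth: "k < n \<Longrightarrow> lb ! k = inv (c ! k) \<otimes> c ! (Suc k)" by (simp add: lb_def del: upt_Suc)

lemma lb_props: "l \<in> set lb \<Longrightarrow> l \<in> S \<and> len l = 1"
proof -
  assume "l \<in> set lb"
  then obtain i where i: "1 \<le> i" "i \<le> n" "l = inv (c ! (i - 1)) \<otimes> c ! i" by (auto simp: lb_def)
  note pd = pleqD[OF mc_step[OF i(1,2)]]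
  have "len l = 1" using pd(4) mc_len[of i] mc_len[of "i - 1"] i by simp
  moreover have "l \<in> Mon G S" using pd(3) i by simp
  ultimately show ?thesis using wlen1_S by blast
qed

lemma lb_carrier: "set lb \<subseteq> carrier G" using lb_props S_sub by blast

lemma lb_take: "j \<le> n \<Longrightarrow> wprod G (take j lb) = c ! j"
proof (induction j)
  case 0 then show ?case using mc_first by simp
next
  case (Suc j)
  have jl: "j < length lb" using Suc lb_length by simp
  have tc: "set (take j lb) \<subseteq> carrier G" using lb_carrier set_take_subset[of j lb] by blast
  have lc: "lb ! j \<in> carrier G" using lb_carrier nth_mem[OF jl] by blast
  have "wprod G (take (Suc j) lb) = wprod G (take j lb) \<otimes> lb ! j"
    using take_Suc_conv_app_nth[OF jl] wprod_append[OF tc] lc by simp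
  also have "\<dots> = c ! j \<otimes> (inv (c ! j) \<otimes> c ! (Suc j))" using Suc lb_nth[of j] by simp
  also have "\<dots> = c ! Suc j" using mc_Mon[of j] mc_Mon[of "Suc j"] Suc by (simp add: m_assoc[symmetric])
  finally show ?case .
qed

lemma lf_c: "lin_fact G S g fsc"
  unfolding lin_fact_def
proof (intro conjI allI impI)
  show "2 \<le> length fsc" by (simp add: fsc_def)
  show "set fsc \<subseteq> Mon G S" using lb_props S_Mon by (auto simp: fsc_def)
  fix i assume i: "0 < i \<and> i + 1 < length fsc"
  then have "fsc ! i = lb ! (i - 1)" "i - 1 < length lb" by (auto simp: fsc_def nth_append lb_length nth_Cons')
  then show "fsc ! i \<noteq> \<one>" using lb_props[of "lb ! (i - 1)"] by auto
next
  have "map len lb = replicate n 1" using lb_props lb_length by (intro nth_equalityI) auto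
  then show "sum_list (map len fsc) = n" by (simp add: fsc_def sum_list_replicate)
next
  have "wprod G fsc = wprod G lb" using lb_carrier by (simp add: fsc_def wprod_append)
  also have "\<dots> = g" using lb_take[of n] lb_length mc_last by simp
  finally show "wprod G fsc = g" .
qed

lemma lws_c: "length wsc = length fsc" by (simp add: wsc_def fsc_def)

lemma wsp_c: "\<forall>i<length fsc. set (wsc!i) \<subseteq> S \<and> length (wsc!i) = len (fsc!i) \<and> wprod G (wsc!i) = fsc!i"
proof (intro allI impI)
  fix i assume i: "i < length fsc"
  consider "i = 0" | "1 \<le> i \<and> i \<le> n" | "i = n + 1" using i lb_length by (simp add: fsc_def) linarith
  then show "set (wsc!i) \<subseteq> S \<and> length (wsc!i) = len (fsc!i) \<and> wprod G (wsc!i) = fsc!i"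
  proof cases
    case 1 then show ?thesis by (simp add: wsc_def fsc_def)
  next
    case 2
    then have e: "wsc ! i = [lb ! (i - 1)]" "fsc ! i = lb ! (i - 1)" "i - 1 < length lb"
      using lb_length by (auto simp: wsc_def fsc_def nth_append nth_Cons')
    have "lb ! (i - 1) \<in> S \<and> len (lb ! (i - 1)) = 1" using lb_props e(3) by simp
    then show ?thesis using e S_sub by auto
  next
    case 3 then show ?thesis using lb_length by (simp add: wsc_def fsc_def nth_append)
  qed
qed

lemma Wd_c: "Wd wsc = lb"
  using Wd_def[OF lf_c lws_c wsp_c] by (simp add: wsc_def)

lemma cC_c: "cC wsc = c"
proof -
  have "cC wsc = map (\<lambda>j. wprod G (take j lb)) [0..<n+1]" using cC_def[OF lf_c lws_c wsp_c] Wd_c by simp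
  also have "\<dots> = map (\<lambda>j. c ! j) [0..<n+1]" using lb_take by simp
  also have "\<dots> = map (\<lambda>j. c ! j) [0..<length c]" using mc_length by simp
  also have "\<dots> = c" by (rule map_nth)
  finally show ?thesis .
qed

definition "Pc x i = sum_list (map x (take i c))"
definition "tpc x = map (Pc x) [0..<n+2]"

context
  fixes x assumes xo: "x \<in> Op" and xs: "supp x \<subseteq> set c"
begin

lemma Pc_Suc: "i \<le> n \<Longrightarrow> Pc x (Suc i) = Pc x i + x (c ! i)"
  using mc_length by (simp add: Pc_def take_Suc_conv_app_nth)

lemma Pc_mono: "i \<le> j \<Longrightarrow> Pc x i \<le> Pc x j"
proof -
  assume "i \<le> j"
  then obtain d where "j = i + d" using le_Suc_ex by blast
  moreover have "take (i + d) c = take i c @ take d (drop i c)" by (simp add: take_add)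
  moreover have "0 \<le> sum_list (map x (take d (drop i c)))" using OptsD(1)[OF xo] by (intro sum_list_nonneg) auto
  ultimately show ?thesis by (simp add: Pc_def)
qed

lemma Pc_total: "Pc x (n + 1) = 1"
proof -
  have "Pc x (n + 1) = sum_list (map x c)" using mc_length by (simp add: Pc_def)
  also have "\<dots> = sum x (set c)" using sum_list_distinct_conv_sum_set[OF chain_distinct[OF mc_chain]] by simp
  also have "\<dots> = sum x (supp x)" by (rule sum.mono_neutral_right) (use xs in \<open>auto simp: supp_def\<close>)
  also have "\<dots> = 1" using OptsD(5)[OF xo] .
  finally show ?thesis .
qed

lemma Pc_0: "Pc x 0 = 0" by (simp add: Pc_def)

lemma tpc_split: "tpc x = 0 # map (Pc x) [1..<n+1] @ [1]"
proof -
  have "[0..<n+2] = 0 # [1..<n+1] @ [n+1]" by (simp add: upt_conv_Cons)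
  then show ?thesis unfolding tpc_def using Pc_0 Pc_total by simp
qed

lemma cp_c: "cell_pos (length fsc) (tpc x)"
  unfolding cell_pos_def
proof (intro conjI)
  show "length (tpc x) = length fsc" by (simp add: tpc_def fsc_def lb_length)
  have "sorted_wrt (\<lambda>a b. Pc x a \<le> Pc x b) [0..<n+2]"
    by (rule sorted_wrt_mono_rel[OF _ sorted_wrt_upt]) (simp add: Pc_mono)
  then show "sorted (tpc x)" unfolding tpc_def sorted_map by (simp del: upt_Suc)
  show "hd (tpc x) = 0" using tpc_split by simp
  show "last (tpc x) = 1" using tpc_split by simp
qed

lemma Ept_c: "Ept fsc (tpc x) = map (Pc x) [1..<n+1]"
proof -
  have "zip fsc (tpc x) = (\<one>, 0) # zip lb (map (Pc x) [1..<n+1]) @ [(\<one>, 1)]"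
    using tpc_split lb_length by (simp add: fsc_def)
  then have "Ept fsc (tpc x) = expand ((\<one>, 0) # zip lb (map (Pc x) [1..<n+1]) @ [(\<one>, 1)])"
    using Ept_def[OF lf_c lws_c wsp_c] by simp
  also have "\<dots> = expand (zip lb (map (Pc x) [1..<n+1]))" by (simp add: expand_def)
  also have "\<dots> = map (Pc x) [1..<n+1]" using expand_unit lb_props lb_length by simp
  finally show ?thesis .
qed

lemma pif_c: "i \<le> n + 1 \<Longrightarrow> pif fsc (tpc x) i = Pc x i"
proof -
  assume i: "i \<le> n + 1"
  note pd = pif_def[OF lf_c lws_c wsp_c, of "tpc x" i]
  consider "i = 0" | "0 < i \<and> i \<le> n" | "i = n + 1" using i by linarith
  then show ?thesis
  proof cases
    case 1 then show ?thesis using pd Pc_0 by simp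
  next
    case 2
    have l: "i - 1 < length [1..<n+1]" using 2 by (simp del: upt_Suc) linarith
    then have "map (Pc x) [1..<n+1] ! (i - 1) = Pc x ([1..<n+1] ! (i - 1))" by (rule nth_map)
    moreover have "[1..<n+1] ! (i - 1) = i" using 2 nth_upt[of 1 "i - 1" "n+1"] by simp
    ultimately show ?thesis using pd 2 Ept_c by simp
  next
    case 3 then show ?thesis using pd Pc_total by simp
  qed
qed

lemma xw_c: "xw fsc wsc (tpc x) = x"
proof
  fix z
  show "xw fsc wsc (tpc x) z = x z"
  proof (cases "z \<in> set c")
    case True
    then obtain j where j: "j < length c" "c ! j = z" by (auto simp: in_set_conv_nth)
    then have jn: "j \<le> n" using mc_length by simp
    have "xw fsc wsc (tpc x) z = pif fsc (tpc x) (j + 1) - pif fsc (tpc x) j"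
      using xw_def[OF lf_c lws_c wsp_c] cC_c True j mc_len[OF jn] by simp
    also have "\<dots> = x z" using pif_c[of j] pif_c[of "j+1"] jn Pc_Suc[OF jn] j by simp
    finally show ?thesis .
  next
    case False
    then have "x z = 0" using xs unfolding supp_def by auto
    then show ?thesis using xw_def[OF lf_c lws_c wsp_c] cC_c False by simp
  qed
qed

lemma fmap_c: "fmap x = realize G fsc (tpc x)"
  using fmap_xw[OF lf_c lws_c wsp_c cp_c] xw_c by simp

end

lemma odist_c:
  assumes "x \<in> Op" "supp x \<subseteq> set c" "y \<in> Op" "supp y \<subseteq> set c"
  shows "odist c x y = wdist G S (fmap x) (fmap y)"
  using odist_wdist[OF lf_c lws_c wsp_c cp_c[OF assms(1,2)] cp_c[OF assms(3,4)]]
    xw_c[OF assms(1,2)] xw_c[OF assms(3,4)] cC_c fmap_c[OF assms(1,2)] fmap_c[OF assms(3,4)] by simp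

end

lemma ostep_wstep:
  assumes "x \<in> Op" "y \<in> Op" "ostep G S g x y r"
  shows "wstep G S g (fmap x) (fmap y) r"
proof -
  obtain c where c: "is_maxchain G S g c" "supp x \<subseteq> set c" "supp y \<subseteq> set c" "r = odist c x y"
    using assms(3) unfolding ostep_def by blast
  show ?thesis unfolding wstep_def
  proof (intro conjI exI)
    show "lin_fact G S g (fsc c)" using lf_c[OF c(1)] .
    show "cell_pos (length (fsc c)) (tpc c x)" using cp_c[OF c(1) assms(1) c(2)] .
    show "cell_pos (length (fsc c)) (tpc c y)" using cp_c[OF c(1) assms(2) c(3)] .
    show "fmap x = realize G (fsc c) (tpc c x)" using fmap_c[OF c(1) assms(1) c(2)] .
    show "fmap y = realize G (fsc c) (tpc c y)" using fmap_c[OF c(1) assms(2) c(3)] .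
    show "r = wdist G S (fmap x) (fmap y)" using odist_c[OF c(1) assms(1) c(2) assms(2) c(3)] c(4) by simp
  qed
qed

end

context WF
begin

lemma ball3: "(\<forall>(a, b, r)\<in>set s. P a b r) \<longleftrightarrow> (\<forall>z\<in>set s. P (fst z) (fst (snd z)) (snd (snd z)))"
  by auto

lemma sum3: "(\<lambda>(a, b, r). r) = (\<lambda>z. snd (snd z))"
  by auto

lemma qdist_eq:
  assumes p: "p \<in> Op" and q: "q \<in> Op"
  shows "qdist (WFactI G S g) (wstep G S g) Sequiv (fmap p) (fmap q) =
         qdist Op (ostep G S g) (Kequiv G S g) p q"
proof -
  let ?W = "WFactI G S g"
  define PO where "PO s \<longleftrightarrow> s \<noteq> [] \<and> Kequiv G S g p (fst (hd s)) \<and> Kequiv G S g (fst (snd (last s))) q \<and>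
      (\<forall>z\<in>set s. fst z \<in> Op \<and> fst (snd z) \<in> Op \<and> ostep G S g (fst z) (fst (snd z)) (snd (snd z))) \<and>
      (\<forall>i. i + 1 < length s \<longrightarrow> Kequiv G S g (fst (snd (s ! i))) (fst (s ! (i + 1))))" for s :: "(('a \<Rightarrow> real) \<times> ('a \<Rightarrow> real) \<times> real) list"
  define PW where "PW s \<longleftrightarrow> s \<noteq> [] \<and> Sequiv (fmap p) (fst (hd s)) \<and> Sequiv (fst (snd (last s))) (fmap q) \<and>
      (\<forall>z\<in>set s. fst z \<in> ?W \<and> fst (snd z) \<in> ?W \<and> wstep G S g (fst z) (fst (snd z)) (snd (snd z))) \<and>
      (\<forall>i. i + 1 < length s \<longrightarrow> Sequiv (fst (snd (s ! i))) (fst (s ! (i + 1))))" for s :: "((real \<Rightarrow> 'a) \<times> (real \<Rightarrow> 'a) \<times> real) list"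
  have eW: "qdist ?W (wstep G S g) Sequiv (fmap p) (fmap q) = Inf {sum_list (map (\<lambda>z. snd (snd z)) s) | s. PW s}"
    unfolding qdist_def PW_def ball3 sum3 ..
  have eO: "qdist Op (ostep G S g) (Kequiv G S g) p q = Inf {sum_list (map (\<lambda>z. snd (snd z)) s) | s. PO s}"
    unfolding qdist_def PO_def ball3 sum3 ..
  have "{sum_list (map (\<lambda>z. snd (snd z)) s) | s. PW s} = {sum_list (map (\<lambda>z. snd (snd z)) s) | s. PO s}"
  proof (intro equalityI subsetI)
    fix v assume "v \<in> {sum_list (map (\<lambda>z. snd (snd z)) s) | s. PW s}"
    then obtain s where s: "PW s" "v = sum_list (map (\<lambda>z. snd (snd z)) s)" by blast
    define lft where "lft z = (SOME xy. fst xy \<in> Op \<and> snd xy \<in> Op \<and> fmap (fst xy) = fst z \<and>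
        fmap (snd xy) = fst (snd z) \<and> ostep G S g (fst xy) (snd xy) (snd (snd z)))"
      for z :: "(real \<Rightarrow> 'a) \<times> (real \<Rightarrow> 'a) \<times> real"
    have lft: "fst (lft z) \<in> Op \<and> snd (lft z) \<in> Op \<and> fmap (fst (lft z)) = fst z \<and>
        fmap (snd (lft z)) = fst (snd z) \<and> ostep G S g (fst (lft z)) (snd (lft z)) (snd (snd z))"
      if "z \<in> set s" for z
    proof -
      have "wstep G S g (fst z) (fst (snd z)) (snd (snd z))" using s(1) that unfolding PW_def by blast
      then obtain x y where "x \<in> Op \<and> y \<in> Op \<and> fmap x = fst z \<and> fmap y = fst (snd z) \<and> ostep G S g x y (snd (snd z))"
        using wstep_lift by blast
      then have "\<exists>xy. fst xy \<in> Op \<and> snd xy \<in> Op \<and> fmap (fst xy) = fst z \<and>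
        fmap (snd xy) = fst (snd z) \<and> ostep G S g (fst xy) (snd xy) (snd (snd z))"
        by (intro exI[of _ "(x, y)"]) simp
      from someI_ex[OF this] show ?thesis unfolding lft_def .
    qed
    define s' where "s' = map (\<lambda>z. (fst (lft z), snd (lft z), snd (snd z))) s"
    have ne: "s \<noteq> []" using s(1) PW_def by blast
    have A: "s' \<noteq> []" using ne s'_def by simp
    have h: "hd s \<in> set s" using ne by simp
    have "Sequiv (fmap p) (fmap (fst (lft (hd s))))" using s(1) lft[OF h] unfolding PW_def by simp
    then have B: "Kequiv G S g p (fst (hd s'))" using S_imp_K[OF p] lft[OF h] ne s'_def by (simp add: hd_map)
    have l: "last s \<in> set s" using ne by simp
    have "Sequiv (fmap (snd (lft (last s)))) (fmap q)" using s(1) lft[OF l] unfolding PW_def by simp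
    then have C: "Kequiv G S g (fst (snd (last s'))) q" using S_imp_K[OF _ q] lft[OF l] ne s'_def by (simp add: last_map)
    have D: "\<forall>z\<in>set s'. fst z \<in> Op \<and> fst (snd z) \<in> Op \<and> ostep G S g (fst z) (fst (snd z)) (snd (snd z))"
    proof
      fix z assume "z \<in> set s'"
      then obtain z0 where z0: "z0 \<in> set s" "z = (fst (lft z0), snd (lft z0), snd (snd z0))" using s'_def by auto
      then show "fst z \<in> Op \<and> fst (snd z) \<in> Op \<and> ostep G S g (fst z) (fst (snd z)) (snd (snd z))"
        using lft[OF z0(1)] by simp
    qed
    have E: "\<forall>i. i + 1 < length s' \<longrightarrow> Kequiv G S g (fst (snd (s' ! i))) (fst (s' ! (i + 1)))"
    proof (intro allI impI)
      fix i assume i: "i + 1 < length s'"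
      then have i': "i < length s" "i + 1 < length s" using s'_def by auto
      have m: "s ! i \<in> set s" "s ! (i + 1) \<in> set s" using i' by auto
      have "Sequiv (fst (snd (s ! i))) (fst (s ! (i + 1)))" using s(1) i' unfolding PW_def by blast
      then have "Sequiv (fmap (snd (lft (s ! i)))) (fmap (fst (lft (s ! (i + 1)))))" using lft[OF m(1)] lft[OF m(2)] by simp
      then have "Kequiv G S g (snd (lft (s ! i))) (fst (lft (s ! (i + 1))))" using S_imp_K lft[OF m(1)] lft[OF m(2)] by blast
      then show "Kequiv G S g (fst (snd (s' ! i))) (fst (s' ! (i + 1)))" using i' s'_def by simp
    qed
    have "PO s'" unfolding PO_def using A B C D E by blast
    moreover have "v = sum_list (map (\<lambda>z. snd (snd z)) s')" using s(2) s'_def by (simp add: comp_def)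
    ultimately show "v \<in> {sum_list (map (\<lambda>z. snd (snd z)) s) | s. PO s}" by blast
  next
    fix v assume "v \<in> {sum_list (map (\<lambda>z. snd (snd z)) s) | s. PO s}"
    then obtain s where s: "PO s" "v = sum_list (map (\<lambda>z. snd (snd z)) s)" by blast
    define s' where "s' = map (\<lambda>z. (fmap (fst z), fmap (fst (snd z)), snd (snd z))) s"
    have ne: "s \<noteq> []" using s(1) PO_def by blast
    have mem: "fst z \<in> Op \<and> fst (snd z) \<in> Op \<and> ostep G S g (fst z) (fst (snd z)) (snd (snd z))" if "z \<in> set s" for z
      using s(1) that unfolding PO_def by blast
    have A: "s' \<noteq> []" using ne s'_def by simp
    have h: "hd s \<in> set s" using ne by simp
    have "Kequiv G S g p (fst (hd s))" using s(1) unfolding PO_def by blast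
    then have B: "Sequiv (fmap p) (fst (hd s'))" using K_imp_S[OF p] mem[OF h] ne s'_def by (simp add: hd_map)
    have l: "last s \<in> set s" using ne by simp
    have "Kequiv G S g (fst (snd (last s))) q" using s(1) unfolding PO_def by blast
    then have C: "Sequiv (fst (snd (last s'))) (fmap q)" using K_imp_S[OF _ q] mem[OF l] ne s'_def by (simp add: last_map)
    have D: "\<forall>z\<in>set s'. fst z \<in> ?W \<and> fst (snd z) \<in> ?W \<and> wstep G S g (fst z) (fst (snd z)) (snd (snd z))"
    proof
      fix z assume "z \<in> set s'"
      then obtain z0 where z0: "z0 \<in> set s" "z = (fmap (fst z0), fmap (fst (snd z0)), snd (snd z0))" using s'_def by auto
      then show "fst z \<in> ?W \<and> fst (snd z) \<in> ?W \<and> wstep G S g (fst z) (fst (snd z)) (snd (snd z))"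
        using mem[OF z0(1)] fmap_WFactI ostep_wstep by simp
    qed
    have E: "\<forall>i. i + 1 < length s' \<longrightarrow> Sequiv (fst (snd (s' ! i))) (fst (s' ! (i + 1)))"
    proof (intro allI impI)
      fix i assume i: "i + 1 < length s'"
      then have i': "i < length s" "i + 1 < length s" using s'_def by auto
      have m: "s ! i \<in> set s" "s ! (i + 1) \<in> set s" using i' by auto
      have "Kequiv G S g (fst (snd (s ! i))) (fst (s ! (i + 1)))" using s(1) i' unfolding PO_def by blast
      then have "Sequiv (fmap (fst (snd (s ! i)))) (fmap (fst (s ! (i + 1))))" using K_imp_S mem[OF m(1)] mem[OF m(2)] by blast
      then show "Sequiv (fst (snd (s' ! i))) (fst (s' ! (i + 1)))" using i' s'_def by simp
    qed
    have "PW s'" unfolding PW_def using A B C D E by blast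
    moreover have "v = sum_list (map (\<lambda>z. snd (snd z)) s')" using s(2) s'_def by (simp add: comp_def)
    ultimately show "v \<in> {sum_list (map (\<lambda>z. snd (snd z)) s) | s. PW s}" by blast
  qed
  then show ?thesis using eW eO by simp
qed

lemma main: "\<exists>f. f ` Op = WFactI G S g \<and>
    (\<forall>p\<in>Op. \<forall>q\<in>Op.
       qdist (WFactI G S g) (wstep G S g) Sequiv (f p) (f q) =
       qdist Op (ostep G S g) (Kequiv G S g) p q)"
proof (intro exI conjI)
  show "fmap ` Op = WFactI G S g" using fmap_WFactI fmap_surj by blast
  show "\<forall>p\<in>Op. \<forall>q\<in>Op. qdist (WFactI G S g) (wstep G S g) Sequiv (fmap p) (fmap q) =
       qdist Op (ostep G S g) (Kequiv G S g) p q" using qdist_eq by blast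
qed

end

theorem proposition4p10:
  fixes G :: "('a, 'b) monoid_scheme" and S :: "'a set" and g :: 'a
  assumes "group G" and "S \<subseteq> carrier G" and "generate G S = carrier G"
    and "conj_closed G S" and "g \<in> Mon G S"
  shows "\<exists>f. f ` Opts G S g = WFactI G S g \<and>
    (\<forall>p\<in>Opts G S g. \<forall>q\<in>Opts G S g.
       qdist (WFactI G S g) (wstep G S g) Sequiv (f p) (f q) =
       qdist (Opts G S g) (ostep G S g) (Kequiv G S g) p q)"
proof -
  interpret WF G S g using assms by (simp add: WF_def WF_axioms_def)
  show ?thesis using main .
qed


end
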